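(* Assume conditions (1)–(4) of the context. Let $\epsilon>0$ and $T^*=\eta^{-1}\mathrm{poly}(\epsilon^{-1},\|\boldsymbol\mu\|_2^{-1},d^{-1}\sigma_p^{-2},\sigma_0^{-1},n,m,d)$. Then on the event $\mathcal E_{\mathrm{prelim}}$, for all $t\in[0,T^*]$, $$\|\nabla L_S(\mathbf W^{(t)})\|_F^2=O\big(\max\{\|\boldsymbol\mu\|_2^2,\sigma_p^2d\}\big)\cdot L_S(\mathbf W^{(t)}).$$
   Context: Data: nonzero $\boldsymbol\mu\in\mathbb R^d$, $\sigma_p>0$; sample $(\mathbf x,y)$, $\mathbf x=[\mathbf x_1^\top,\mathbf x_2^\top]^\top$: $y$ Rademacher, $\boldsymbol\xi\sim N(\mathbf 0,\sigma_p^2(\mathbf I-\boldsymbol\mu\boldsymbol\mu^\top\|\boldsymbol\mu\|_2^{-2}))$, one patch $y\boldsymbol\mu$, the other $\boldsymbol\xi$. Training set $\{(\mathbf x_i,y_i)\}_{i=1}^n$ i.i.d., noise patches $\boldsymbol\xi_i$. Network: $\sigma(z)=(\max\{0,z\})^q$, $q>2$; $F_j(\mathbf W_j,\mathbf x)=\frac1m\sum_{r=1}^m[\sigma(\langle\mathbf w_{j,r},\mathbf x_1\rangle)+\sigma(\langle\mathbf w_{j,r},\mathbf x_2\rangle)]$, $f=F_{+1}-F_{-1}$; $\ell(z)=\log(1+e^{-z})$, $L_S(\mathbf W)=\frac1n\sum_i\ell(y_if(\mathbf W,\mathbf x_i))$; $\|\mathbf W\|_F=\sqrt{\|\mathbf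 W_{+1}\|_F^2+\|\mathbf W_{-1}\|_F^2}$. Gradient descent $\mathbf W^{(t)}$ with step $\eta$ from i.i.d. $N(0,\sigma_0^2)$ initialization. Conditions: (1) $d=\tilde\Omega(m^{2\vee[4/(q-2)]}n^{4\vee[(2q-2)/(q-2)]})$; (2) $n,m=\Omega(\mathrm{polylog}(d))$; (3) $\eta\le\tilde O(\min\{\|\boldsymbol\mu\|_2^{-2},\sigma_p^{-2}d^{-1}\})$; (4) $\tilde O(nd^{-1/2})\min\{(\sigma_p\sqrt d)^{-1},\|\boldsymbol\mu\|_2^{-1}\}\le\sigma_0\le\tilde O(m^{-2/(q-2)}n^{-[1/(q-2)]\vee1})\min\{(\sigma_p\sqrt d)^{-1},\|\boldsymbol\mu\|_2^{-1}\}$. Standing assumption: $\delta\in(0,1)$ and $\mathcal E_{\mathrm{prelim}}$ is the high-probability event on which: both label classes have at least $n/4$ samples; $\sigma_p^2d/2\le\|\boldsymbol\xi_i\|_2^2\le3\sigma_p^2d/2$ and $|\langle\boldsymbol\xi_i,\boldsymbol\xi_{i'}\rangle|\le2\sigma_p^2\sqrt{d\log(4n^2/\delta)}$ for $i\ne i'$; $|\langle\mathbf w_{j,r}^{(0)},\boldsymbol\mu\rangle|\le\sqrt{2\log(8m/\delta)}\sigma_0\|\boldsymbol\mu\|_2$, $|\langle\mathbf w_{j,r}^{(0)},\boldsymbol\xi_i\rangle|\le2\sqrt{\log(8mn/\delta)}\sigma_0\sigma_p\sqrt d$, $\max_rj\langle\mathbf w_{j,r}^{(0)},\boldsymbol\mu\rangle\ge\sigma_0\|\boldsymbol\mu\|_2/2$,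 $\max_rj\langle\mathbf w_{j,r}^{(0)},\boldsymbol\xi_i\rangle\ge\sigma_0\sigma_p\sqrt d/4$. *)

theory Defs
  imports "HOL-Analysis.Analysis"
begin

text \<open>Vectors in R^d are represented as functions nat => real, only the
coordinates k < d being relevant.  The weights W j r (j in {1,-1}, r < m) are
such vectors, so a full parameter is W :: int => nat => nat => real.\<close>

definition vinner :: "nat \<Rightarrow> (nat \<Rightarrow> real) \<Rightarrow> (nat \<Rightarrow> real) \<Rightarrow> real" where
  "vinner d u v = (\<Sum>k<d. u k * v k)"

definition vnorm :: "nat \<Rightarrow> (nat \<Rightarrow> real) \<Rightarrow> real" where
  "vnorm d u = sqrt (vinner d u u)"

definition act :: "real \<Rightarrow> real \<Rightarrow> real" where
  "act q z = (max 0 z) powr q"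

definition Fj :: "real \<Rightarrow> nat \<Rightarrow> nat \<Rightarrow> (int \<Rightarrow> nat \<Rightarrow> nat \<Rightarrow> real) \<Rightarrow> int
                  \<Rightarrow> (nat \<Rightarrow> real) \<Rightarrow> (nat \<Rightarrow> real) \<Rightarrow> real" where
  "Fj q m d W j x1 x2 =
     (1 / real m) * (\<Sum>r<m. act q (vinner d (W j r) x1) + act q (vinner d (W j r) x2))"

definition fnet :: "real \<Rightarrow> nat \<Rightarrow> nat \<Rightarrow> (int \<Rightarrow> nat \<Rightarrow> nat \<Rightarrow> real)
                  \<Rightarrow> (nat \<Rightarrow> real) \<Rightarrow> (nat \<Rightarrow> real) \<Rightarrow> real" where
  "fnet q m d W x1 x2 = Fj q m d W 1 x1 x2 - Fj q m d W (-1) x1 x2"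

definition logloss :: "real \<Rightarrow> real" where
  "logloss z = ln (1 + exp (- z))"

text \<open>Training loss L_S(W).  Sample i has label y i and patches y_i mu and xi_i
(the order of the two patches is immaterial since F_j is symmetric in them).\<close>
definition LS :: "real \<Rightarrow> nat \<Rightarrow> nat \<Rightarrow> nat \<Rightarrow> (nat \<Rightarrow> real) \<Rightarrow> (nat \<Rightarrow> real)
                  \<Rightarrow> (nat \<Rightarrow> nat \<Rightarrow> real) \<Rightarrow> (int \<Rightarrow> nat \<Rightarrow> nat \<Rightarrow> real) \<Rightarrow> real" where
  "LS q m d n y mu xi W =
     (1 / real n) * (\<Sum>i<n. logloss (y i * fnet q m d W (\<lambda>k. y i * mu k) (xi i)))"

definition coord_upd :: "(int \<Rightarrow> nat \<Rightarrow> nat \<Rightarrow> real) \<Rightarrow> int \<Rightarrow> nat \<Rightarrow> nat \<Rightarrow> real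
                         \<Rightarrow> (int \<Rightarrow> nat \<Rightarrow> nat \<Rightarrow> real)" where
  "coord_upd W j r k s = (\<lambda>j' r' k'. if j' = j \<and> r' = r \<and> k' = k then W j' r' k' + s else W j' r' k')"

definition grad :: "((int \<Rightarrow> nat \<Rightarrow> nat \<Rightarrow> real) \<Rightarrow> real) \<Rightarrow> (int \<Rightarrow> nat \<Rightarrow> nat \<Rightarrow> real)
                    \<Rightarrow> int \<Rightarrow> nat \<Rightarrow> nat \<Rightarrow> real" where
  "grad L W j r k = deriv (\<lambda>s. L (coord_upd W j r k s)) 0"

definition frob2 :: "nat \<Rightarrow> nat \<Rightarrow> (int \<Rightarrow> nat \<Rightarrow> nat \<Rightarrow> real) \<Rightarrow> real" where
  "frob2 m d W = (\<Sum>j\<in>{1, -1::int}. \<Sum>r<m. \<Sum>k<d. (W j r k)\<^sup>2)"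

primrec gd :: "((int \<Rightarrow> nat \<Rightarrow> nat \<Rightarrow> real) \<Rightarrow> real) \<Rightarrow> real
               \<Rightarrow> (int \<Rightarrow> nat \<Rightarrow> nat \<Rightarrow> real) \<Rightarrow> nat \<Rightarrow> (int \<Rightarrow> nat \<Rightarrow> nat \<Rightarrow> real)" where
  "gd L eta W0 0 = W0"
| "gd L eta W0 (Suc t) = (\<lambda>j r k. gd L eta W0 t j r k - eta * grad L (gd L eta W0 t) j r k)"

definition E_prelim :: "real \<Rightarrow> nat \<Rightarrow> nat \<Rightarrow> nat \<Rightarrow> real \<Rightarrow> real \<Rightarrow> (nat \<Rightarrow> real) \<Rightarrow> (nat \<Rightarrow> real)
                        \<Rightarrow> (nat \<Rightarrow> nat \<Rightarrow> real) \<Rightarrow> (int \<Rightarrow> nat \<Rightarrow> nat \<Rightarrow> real) \<Rightarrow> bool" where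
  "E_prelim \<delta> m d n sigp sig0 y mu xi W0 \<longleftrightarrow>
     real (card {i\<in>{..<n}. y i = 1}) \<ge> real n / 4 \<and>
     real (card {i\<in>{..<n}. y i = -1}) \<ge> real n / 4 \<and>
     (\<forall>i<n. sigp\<^sup>2 * real d / 2 \<le> (vnorm d (xi i))\<^sup>2 \<and> (vnorm d (xi i))\<^sup>2 \<le> 3 * sigp\<^sup>2 * real d / 2) \<and>
     (\<forall>i<n. \<forall>i'<n. i \<noteq> i' \<longrightarrow>
        \<bar>vinner d (xi i) (xi i')\<bar> \<le> 2 * sigp\<^sup>2 * sqrt (real d * ln (4 * real n ^ 2 / \<delta>))) \<and>
     (\<forall>j\<in>{1,-1}. \<forall>r<m.
        \<bar>vinner d (W0 j r) mu\<bar> \<le> sqrt (2 * ln (8 * real m / \<delta>)) * sig0 * vnorm d mu) \<and>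
     (\<forall>j\<in>{1,-1}. \<forall>r<m. \<forall>i<n.
        \<bar>vinner d (W0 j r) (xi i)\<bar> \<le> 2 * sqrt (ln (8 * real m * real n / \<delta>)) * sig0 * sigp * sqrt (real d)) \<and>
     (\<forall>j\<in>{1,-1}. (MAX r\<in>{..<m}. of_int j * vinner d (W0 j r) mu) \<ge> sig0 * vnorm d mu / 2) \<and>
     (\<forall>j\<in>{1,-1}. \<forall>i<n. (MAX r\<in>{..<m}. of_int j * vinner d (W0 j r) (xi i)) \<ge> sig0 * sigp * sqrt (real d) / 4)"

end

theory Submission
  imports Defs
begin


definition dact :: "real \<Rightarrow> real \<Rightarrow> real" where
  "dact q z = q * (max 0 z) powr (q - 1)"

lemma act_deriv:
  assumes "q > 1"
  shows "(act q has_real_derivative dact q z) (at z)"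
proof (cases "z > 0")
  case True
  have ev: "eventually (\<lambda>x. act q x = x powr q) (nhds z)"
    using True eventually_nhds_in_open[of "{0<..}" z]
    by (auto simp: act_def elim!: eventually_mono)
  show ?thesis
    apply (subst DERIV_cong_ev[OF refl ev refl])
    using has_real_derivative_powr[OF True, of q] True by (simp add: dact_def)
next
  case False
  show ?thesis
  proof (cases "z < 0")
    case True
    have ev: "eventually (\<lambda>x. act q x = 0) (nhds z)"
      using True eventually_nhds_in_open[of "{..<0}" z]
      by (auto simp: act_def elim!: eventually_mono)
    show ?thesis
      apply (subst DERIV_cong_ev[OF refl ev refl])
      using True assms by (simp add: dact_def)
  next
    case False
    with \<open>\<not> z > 0\<close> have z: "z = 0" by auto
    have "((\<lambda>h. (act q (0 + h) - act q 0) / h) \<longlongrightarrow> 0) (at 0)"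
    proof (rule Lim_null_comparison)
      show "eventually (\<lambda>h. norm ((act q (0 + h) - act q 0) / h) \<le> \<bar>h\<bar> powr (q - 1)) (at 0)"
      proof (rule always_eventually, rule allI)
        fix h :: real
        show "norm ((act q (0 + h) - act q 0) / h) \<le> \<bar>h\<bar> powr (q - 1)"
        proof (cases "h > 0")
          case True
          then show ?thesis using assms
            by (simp add: act_def powr_diff divide_simps)
        next
          case False
          then show ?thesis by (simp add: act_def)
        qed
      qed
      show "((\<lambda>h. \<bar>h\<bar> powr (q - 1)) \<longlongrightarrow> 0) (at 0)"
        using assms by (auto intro!: tendsto_zero_powrI tendsto_eq_intros)
    qed
    then show ?thesis using z assms by (simp add: DERIV_def dact_def)
  qed
qed

definition lp :: "real \<Rightarrow> real" where
  "lp z = - 1 / (1 + exp z)"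

definition sg :: "int \<Rightarrow> real" where
  "sg j = (if j = 1 then 1 else if j = -1 then -1 else 0)"

lemma logloss_deriv: "(logloss has_real_derivative lp z) (at z)"
proof -
  have "((\<lambda>z. ln (1 + exp (- z))) has_real_derivative (1 / (1 + exp (-z))) * (exp (-z) * (-1))) (at z)"
    by (auto intro!: derivative_eq_intros simp: add_pos_pos)
  moreover have "(1 / (1 + exp (-z))) * (exp (-z) * (-1)) = lp z"
    by (simp add: lp_def exp_minus field_simps add_pos_pos)
  ultimately show ?thesis unfolding logloss_def by simp
qed

lemma vinner_upd:
  assumes "k < d"
  shows "vinner d (coord_upd W j r k s j' r') x
         = vinner d (W j' r') x + (if j' = j \<and> r' = r then s * x k else 0)"
proof -
  have "vinner d (coord_upd W j r k s j' r') x
      = (\<Sum>k'<d. W j' r' k' * x k' + (if j' = j \<and> r' = r \<and> k' = k then s * x k' else 0))"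
    unfolding vinner_def coord_upd_def by (rule sum.cong) (auto simp: algebra_simps)
  also have "\<dots> = vinner d (W j' r') x + (\<Sum>k'<d. (if j' = j \<and> r' = r \<and> k' = k then s * x k' else 0))"
    by (simp add: sum.distrib vinner_def)
  also have "(\<Sum>k'<d. (if j' = j \<and> r' = r \<and> k' = k then s * x k' else 0)) = (if j' = j \<and> r' = r then s * x k else 0)"
    using assms by (cases "j' = j \<and> r' = r") auto
  finally show ?thesis .
qed

lemma Fj_upd:
  assumes "r < m" "k < d"
  shows "Fj q m d (coord_upd W j r k s) j' x1 x2 = Fj q m d W j' x1 x2
     + (if j' = j then (act q (vinner d (W j r) x1 + s * x1 k) - act q (vinner d (W j r) x1)
          + act q (vinner d (W j r) x2 + s * x2 k) - act q (vinner d (W j r) x2)) / real m else 0)"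
proof -
  let ?D = "\<lambda>r'. (if j' = j \<and> r' = r then (act q (vinner d (W j r) x1 + s * x1 k) - act q (vinner d (W j r) x1)
          + act q (vinner d (W j r) x2 + s * x2 k) - act q (vinner d (W j r) x2)) else 0)"
  have "(\<Sum>r'<m. act q (vinner d (coord_upd W j r k s j' r') x1) + act q (vinner d (coord_upd W j r k s j' r') x2))
      = (\<Sum>r'<m. (act q (vinner d (W j' r') x1) + act q (vinner d (W j' r') x2)) + ?D r')"
    by (rule sum.cong) (auto simp: vinner_upd[OF assms(2)])
  also have "\<dots> = (\<Sum>r'<m. act q (vinner d (W j' r') x1) + act q (vinner d (W j' r') x2)) + (\<Sum>r'<m. ?D r')"
    by (simp add: sum.distrib)
  also have "(\<Sum>r'<m. ?D r') = (if j' = j then (act q (vinner d (W j r) x1 + s * x1 k) - act q (vinner d (W j r) x1)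
          + act q (vinner d (W j r) x2 + s * x2 k) - act q (vinner d (W j r) x2)) else 0)"
    using assms by (cases "j' = j") auto
  finally have X: "(\<Sum>r'<m. act q (vinner d (coord_upd W j r k s j' r') x1) + act q (vinner d (coord_upd W j r k s j' r') x2))
     = (\<Sum>r'<m. act q (vinner d (W j' r') x1) + act q (vinner d (W j' r') x2)) + (if j' = j then (act q (vinner d (W j r) x1 + s * x1 k) - act q (vinner d (W j r) x1)
          + act q (vinner d (W j r) x2 + s * x2 k) - act q (vinner d (W j r) x2)) else 0)" .
  show ?thesis unfolding Fj_def X by (cases "j' = j") (simp_all add: distrib_left)
qed

lemma fnet_upd:
  assumes "r < m" "k < d" "j = 1 \<or> j = -1"
  shows "fnet q m d (coord_upd W j r k s) x1 x2 = fnet q m d W x1 x2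
     + sg j * (act q (vinner d (W j r) x1 + s * x1 k) - act q (vinner d (W j r) x1)
          + act q (vinner d (W j r) x2 + s * x2 k) - act q (vinner d (W j r) x2)) / real m"
  using assms unfolding fnet_def by (auto simp: Fj_upd sg_def diff_divide_distrib add_divide_distrib)

lemma act_line_deriv:
  assumes q: "q > 1"
  shows "((\<lambda>s. act q (a + s * u)) has_real_derivative dact q a * u) (at 0)"
proof -
  have "((\<lambda>s. a + s * u) has_real_derivative u) (at 0)"
    by (auto intro!: derivative_eq_intros)
  from DERIV_chain2[OF _ this, of "act q" "dact q a"] act_deriv[OF q, of a]
  show ?thesis by simp
qed

lemma loss_line_deriv:
  assumes q: "q > 1"
  shows "((\<lambda>s. logloss (z + c * (act q (a1 + s * u1) - act q a1 + act q (a2 + s * u2) - act q a2)))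
     has_real_derivative lp z * (c * (dact q a1 * u1 + dact q a2 * u2))) (at 0)"
proof -
  have inner: "((\<lambda>s. z + c * (act q (a1 + s * u1) - act q a1 + act q (a2 + s * u2) - act q a2))
     has_real_derivative c * (dact q a1 * u1 + dact q a2 * u2)) (at 0)"
    using act_line_deriv[OF q, of a1 u1] act_line_deriv[OF q, of a2 u2]
    by (auto intro!: derivative_eq_intros)
  from DERIV_chain2[OF _ inner, of logloss "lp z"] logloss_deriv[of z]
  show ?thesis by simp
qed

lemma grad_formula:
  assumes q: "q > 1" and "r < m" "k < d" "j = 1 \<or> j = -1"
  shows "grad (LS q m d n y mu xi) W j r k =
    (1 / real n) * (\<Sum>i<n. lp (y i * fnet q m d W (\<lambda>k. y i * mu k) (xi i)) * y i * sg j *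
        (dact q (vinner d (W j r) (\<lambda>k. y i * mu k)) * (y i * mu k) + dact q (vinner d (W j r) (xi i)) * xi i k) / real m)"
proof -
  define a1 where "a1 i = vinner d (W j r) (\<lambda>k. y i * mu k)" for i
  define a2 where "a2 i = vinner d (W j r) (xi i)" for i
  define z where "z i = y i * fnet q m d W (\<lambda>k. y i * mu k) (xi i)" for i
  have eq: "LS q m d n y mu xi (coord_upd W j r k s) = (1 / real n) * (\<Sum>i<n. logloss (z i + (y i * sg j / real m) *
     (act q (a1 i + s * (y i * mu k)) - act q (a1 i) + act q (a2 i + s * xi i k) - act q (a2 i))))" for s
    unfolding LS_def
    apply (rule arg_cong[where f="\<lambda>x. (1/real n) * x"])
    apply (rule sum.cong[OF refl])
    apply (rule arg_cong[where f=logloss])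
    apply (simp add: fnet_upd[OF assms(2-4)] z_def a1_def a2_def)
    apply (simp add: algebra_simps)
    done
  have "((\<lambda>s. LS q m d n y mu xi (coord_upd W j r k s)) has_real_derivative
     (1 / real n) * (\<Sum>i<n. lp (z i) * ((y i * sg j / real m) * (dact q (a1 i) * (y i * mu k) + dact q (a2 i) * xi i k)))) (at 0)"
    unfolding eq
    by (intro DERIV_cmult DERIV_sum loss_line_deriv[OF q])
  then have "((\<lambda>s. LS q m d n y mu xi (coord_upd W j r k s)) has_real_derivative
     (1 / real n) * (\<Sum>i<n. lp (z i) * y i * sg j * (dact q (a1 i) * (y i * mu k) + dact q (a2 i) * xi i k) / real m)) (at 0)"
    by (simp add: algebra_simps add_divide_distrib)
  then show ?thesis unfolding grad_def a1_def a2_def z_def by (rule DERIV_imp_deriv)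
qed


lemma act_nonneg: "act q z \<ge> 0"
  by (simp add: act_def)

lemma dact_nonneg: "q \<ge> 0 \<Longrightarrow> dact q z \<ge> 0"
  by (simp add: dact_def)

lemma dact_le: assumes "q \<ge> 1" shows "dact q z \<le> q * (1 + act q z)"
proof (cases "z \<le> 1")
  case True
  have "max 0 z powr (q - 1) \<le> 1"
    using True assms by (auto intro!: powr_le1 simp: max_def)
  then have "q * max 0 z powr (q - 1) \<le> q * 1"
    using assms by (intro mult_left_mono) auto
  moreover have "q * 1 \<le> q * (1 + act q z)"
    using assms act_nonneg[of q z] by (intro mult_left_mono) auto
  ultimately show ?thesis unfolding dact_def by linarith
next
  case False
  then have "max 0 z powr (q - 1) \<le> max 0 z powr q"
    by (intro powr_mono) auto
  then have "q * max 0 z powr (q - 1) \<le> q * max 0 z powr q"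
    using assms by (intro mult_left_mono) auto
  moreover have "q * max 0 z powr q \<le> q * (1 + act q z)"
    using assms by (intro mult_left_mono) (auto simp: act_def)
  ultimately show ?thesis unfolding dact_def by linarith
qed

lemma act_le1: assumes "q > 0" "z \<le> 1" shows "act q z \<le> 1"
  using assms by (auto simp: act_def max_def intro!: powr_le1)

lemma dact_le_q: assumes "q \<ge> 1" "z \<le> 1" shows "dact q z \<le> q"
proof -
  have "max 0 z powr (q - 1) \<le> 1"
    using assms by (auto intro!: powr_le1 simp: max_def)
  then have "q * max 0 z powr (q - 1) \<le> q * 1"
    using assms by (intro mult_left_mono) auto
  then show ?thesis unfolding dact_def by simp
qed

lemma dact_nonpos: "z \<le> 0 \<Longrightarrow> dact q z = 0"
  by (simp add: dact_def max_def)

lemma abs_lp: "\<bar>lp z\<bar> = 1 / (1 + exp z)"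
  by (simp add: lp_def add_pos_pos)

lemma lp_neg: "lp z < 0"
  by (simp add: lp_def add_pos_pos)

lemma abs_lp_le_logloss: "\<bar>lp z\<bar> \<le> logloss z"
proof -
  have pos: "1 + exp (-z) > 0" by (simp add: add_pos_pos)
  have "ln (1 / (1 + exp (-z))) \<le> 1 / (1 + exp (-z)) - 1"
    using ln_le_minus_one[of "1 / (1 + exp (-z))"] pos by simp
  then have "- ln (1 + exp (-z)) \<le> 1 / (1 + exp (-z)) - 1"
    using pos by (simp add: ln_div)
  moreover have "1 / (1 + exp (-z)) - 1 = - (1 / (1 + exp z))"
  proof -
    have p2: "1 + exp z > 0" by (simp add: add_pos_pos)
    have "1 / (1 + exp (-z)) = exp z / (1 + exp z)" by (simp add: exp_minus field_simps)
    moreover have "exp z / (1 + exp z) - 1 = - (1 / (1 + exp z))" using p2 by (simp add: field_simps)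
    ultimately show ?thesis by simp
  qed
  ultimately show ?thesis unfolding abs_lp logloss_def by linarith
qed

lemma abs_lp_le1: "\<bar>lp z\<bar> \<le> 1"
  unfolding abs_lp by (simp add: add_pos_pos)

lemma abs_lp_le_exp: "\<bar>lp z\<bar> \<le> exp (- z)"
  unfolding abs_lp by (simp add: exp_minus field_simps add_pos_pos)

lemma exp_quad: fixes z :: real assumes "z \<ge> 0" shows "1 + z + z^2 / 4 \<le> exp z"
proof -
  have "1 + z / 2 \<le> exp (z / 2)" by (rule exp_ge_add_one_self)
  then have "(1 + z / 2)^2 \<le> (exp (z / 2))^2"
    using assms by (intro power_mono) auto
  also have "(exp (z / 2))^2 = exp z"
    by (simp add: power2_eq_square flip: exp_add)
  finally show ?thesis by (simp add: power2_eq_square field_simps)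
qed

lemma lp_poly_bound: "\<bar>lp z\<bar> * (8 + max z 0)^2 \<le> 128"
proof (cases "z \<le> 0")
  case True
  then have "\<bar>lp z\<bar> * (8 + max z 0)^2 = \<bar>lp z\<bar> * 64" by (simp add: max_def)
  also have "\<dots> \<le> 1 * 64" using abs_lp_le1[of z] by (intro mult_right_mono) auto
  finally show ?thesis by simp
next
  case False
  have e: "1 + z + z^2 / 4 \<le> exp z" using False by (intro exp_quad) auto
  have "(8 + z)^2 \<le> 128 * (1 + z + z^2 / 4)"
    using False by (simp add: power2_eq_square algebra_simps)
  also have "\<dots> \<le> 128 * exp z" using e by simp
  finally have "(8 + z)^2 \<le> 128 * exp z" .
  then have "(8 + z)^2 * exp (-z) \<le> 128"
    by (simp add: exp_minus field_simps)
  moreover have "\<bar>lp z\<bar> * (8 + z)^2 \<le> exp (-z) * (8 + z)^2"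
    using abs_lp_le_exp[of z] by (intro mult_right_mono) auto
  ultimately have "\<bar>lp z\<bar> * (8 + z)^2 \<le> 128" by (simp only: mult.commute[of "exp (-z)"])
  then show ?thesis using False by (simp add: max_def)
qed

lemma logloss_nonneg: "logloss z \<ge> 0"
  by (simp add: logloss_def)

lemma lp_sq_bound: "(lp z)^2 * (8 + max z 0)^2 \<le> 128 * logloss z"
proof -
  have "(lp z)^2 * (8 + max z 0)^2 = \<bar>lp z\<bar> * (\<bar>lp z\<bar> * (8 + max z 0)^2)"
    by (simp add: power2_eq_square)
  also have "\<dots> \<le> logloss z * 128"
    by (intro mult_mono abs_lp_le_logloss lp_poly_bound) (auto intro: mult_nonneg_nonneg simp: logloss_nonneg)
  finally show ?thesis by simp
qed

lemma sum_sq_le_sq_sum: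
  fixes f :: "'a \<Rightarrow> real"
  assumes "finite A" "\<And>x. x \<in> A \<Longrightarrow> f x \<ge> 0"
  shows "(\<Sum>x\<in>A. (f x)^2) \<le> (\<Sum>x\<in>A. f x)^2"
proof -
  have "(\<Sum>x\<in>A. (f x)^2) \<le> (\<Sum>x\<in>A. f x * (\<Sum>x\<in>A. f x))"
  proof (intro sum_mono)
    fix x assume x: "x \<in> A"
    have "f x \<le> (\<Sum>x\<in>A. f x)" using assms x by (intro member_le_sum) auto
    then show "(f x)^2 \<le> f x * (\<Sum>x\<in>A. f x)"
      using assms(2)[OF x] by (simp add: power2_eq_square mult_left_mono)
  qed
  also have "\<dots> = (\<Sum>x\<in>A. f x)^2" by (simp add: power2_eq_square sum_distrib_right)
  finally show ?thesis .
qed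




lemma vinner_sq_nonneg: "vinner d u u \<ge> 0"
  unfolding vinner_def by (intro sum_nonneg) auto

lemma sq_sum_le: "(a + b)^2 \<le> 2 * a^2 + 2 * (b::real)^2"
proof -
  have "0 \<le> (a - b)^2" by simp
  then show ?thesis by (simp add: power2_eq_square algebra_simps)
qed

lemma k_sum_bound:
  assumes "yi = 1 \<or> yi = -1" "j = 1 \<or> j = -1" "vinner d mu mu \<le> M2" "vinner d xv xv \<le> M2"
    and "A \<ge> 0" "B \<ge> 0"
  shows "(\<Sum>k<d. (yi * sg j * (A * (yi * mu k) + B * xv k) / real m)^2) \<le> 2 * M2 * ((A + B) / real m)^2"
proof -
  have s2: "(yi * sg j)^2 = 1" using assms(1,2) by (auto simp: sg_def)
  have e1: "(yi * sg j * X / real m)^2 = X^2 / (real m)^2" for X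
  proof -
    have "(yi * sg j * X / real m)^2 = (yi * sg j)^2 * X^2 / (real m)^2"
      by (simp only: power_divide power_mult_distrib)
    then show ?thesis using s2 by simp
  qed
  have "(\<Sum>k<d. (yi * sg j * (A * (yi * mu k) + B * xv k) / real m)^2)
      = (\<Sum>k<d. (A * (yi * mu k) + B * xv k)^2) / (real m)^2"
    by (simp only: e1 sum_divide_distrib)
  also have "(\<Sum>k<d. (A * (yi * mu k) + B * xv k)^2) \<le> (\<Sum>k<d. 2 * A^2 * (mu k * mu k) + 2 * B^2 * (xv k * xv k))"
  proof (intro sum_mono)
    fix k
    have y2: "yi^2 = 1" using assms(1) by auto
    have "(A * (yi * mu k) + B * xv k)^2 \<le> 2 * (A * (yi * mu k))^2 + 2 * (B * xv k)^2"
      by (rule sq_sum_le)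
    also have "\<dots> = 2 * A^2 * (mu k * mu k) + 2 * B^2 * (xv k * xv k)"
      using y2 by (simp add: power_mult_distrib power2_eq_square)
    finally show "(A * (yi * mu k) + B * xv k)^2 \<le> 2 * A^2 * (mu k * mu k) + 2 * B^2 * (xv k * xv k)" .
  qed
  also have "\<dots> = 2 * A^2 * vinner d mu mu + 2 * B^2 * vinner d xv xv"
    by (simp add: vinner_def sum.distrib sum_distrib_left)
  also have "\<dots> \<le> 2 * A^2 * M2 + 2 * B^2 * M2"
    using assms by (intro add_mono mult_left_mono) auto
  also have "\<dots> \<le> 2 * M2 * (A + B)^2"
  proof -
    have "M2 \<ge> 0" using vinner_sq_nonneg[of d mu] assms(3) by linarith
    moreover have "A^2 + B^2 \<le> (A + B)^2" using assms(5,6) by (simp add: power2_sum)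
    ultimately have "M2 * (A^2 + B^2) \<le> M2 * (A + B)^2" by (metis mult_left_mono)
    then show ?thesis by (simp add: algebra_simps)
  qed
  finally have "(\<Sum>k<d. (yi * sg j * (A * (yi * mu k) + B * xv k) / real m)^2) \<le> 2 * M2 * (A + B)^2 / (real m)^2"
    by (simp add: divide_right_mono)
  then show ?thesis by (simp add: power_divide)
qed


lemma r_sum_bound:
  assumes q: "q \<ge> 1" and m: "m \<ge> 1" and yi: "yi = 1 \<or> yi = -1" and j: "j = 1 \<or> j = -1"
    and M: "vinner d mu mu \<le> M2" "vinner d xv xv \<le> M2"
  shows "(\<Sum>r<m. \<Sum>k<d. (yi * sg j * (dact q (vinner d (W j r) (\<lambda>k. yi * mu k)) * (yi * mu k)
            + dact q (vinner d (W j r) xv) * xv k) / real m)^2)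
         \<le> 2 * M2 * q^2 * (2 + Fj q m d W j (\<lambda>k. yi * mu k) xv)^2"
proof -
  define a where "a r = vinner d (W j r) (\<lambda>k. yi * mu k)" for r
  define b where "b r = vinner d (W j r) xv" for r
  define P where "P r = (dact q (a r) + dact q (b r)) / real m" for r
  have M2: "M2 \<ge> 0" using vinner_sq_nonneg[of d mu] M by linarith
  have P0: "P r \<ge> 0" for r using q by (simp add: P_def dact_nonneg)
  have "(\<Sum>r<m. \<Sum>k<d. (yi * sg j * (dact q (a r) * (yi * mu k) + dact q (b r) * xv k) / real m)^2)
      \<le> (\<Sum>r<m. 2 * M2 * (P r)^2)"
    unfolding P_def using q
    by (intro sum_mono k_sum_bound[OF yi j M]) (auto simp: dact_nonneg)
  also have "\<dots> = 2 * M2 * (\<Sum>r<m. (P r)^2)" by (simp add: sum_distrib_left)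
  also have "\<dots> \<le> 2 * M2 * (\<Sum>r<m. P r)^2"
    using M2 P0 by (intro mult_left_mono sum_sq_le_sq_sum) auto
  also have "(\<Sum>r<m. P r) \<le> q * (2 + Fj q m d W j (\<lambda>k. yi * mu k) xv)"
  proof -
    have "(\<Sum>r<m. P r) \<le> (\<Sum>r<m. q * (2 + act q (a r) + act q (b r)) / real m)"
      unfolding P_def
    proof (intro sum_mono divide_right_mono)
      fix r
      show "dact q (a r) + dact q (b r) \<le> q * (2 + act q (a r) + act q (b r))"
        using dact_le[OF q, of "a r"] dact_le[OF q, of "b r"] by (simp add: algebra_simps)
    qed auto
    also have "\<dots> = q * (2 * real m + (\<Sum>r<m. act q (a r) + act q (b r))) / real m"
      by (simp add: sum_divide_distrib[symmetric] sum_distrib_left[symmetric] sum.distrib algebra_simps)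
    also have "\<dots> = q * (2 + Fj q m d W j (\<lambda>k. yi * mu k) xv)"
      using m unfolding Fj_def a_def b_def by (simp add: field_simps)
    finally show ?thesis .
  qed
  then have "(\<Sum>r<m. P r)^2 \<le> (q * (2 + Fj q m d W j (\<lambda>k. yi * mu k) xv))^2"
    using P0 by (intro power_mono) (auto intro: sum_nonneg)
  then have "2 * M2 * (\<Sum>r<m. P r)^2 \<le> 2 * M2 * (q * (2 + Fj q m d W j (\<lambda>k. yi * mu k) xv))^2"
    using M2 by (intro mult_left_mono) auto
  finally show ?thesis unfolding a_def b_def by (simp add: power_mult_distrib mult.assoc)
qed


lemma Fj_nonneg: "Fj q m d W j x1 x2 \<ge> 0"
  unfolding Fj_def by (intro mult_nonneg_nonneg sum_nonneg add_nonneg_nonneg act_nonneg) auto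

lemma per_sample_bound:
  assumes q: "q \<ge> 1" and m: "m \<ge> 1" and yi: "yi = 1 \<or> yi = -1"
    and M: "vinner d mu mu \<le> M2" "vinner d xv xv \<le> M2"
    and Fneg: "Fj q m d W (if yi = 1 then -1 else 1) (\<lambda>k. yi * mu k) xv \<le> 2"
  shows "(lp (yi * fnet q m d W (\<lambda>k. yi * mu k) xv))^2 *
     (\<Sum>j\<in>{1,-1::int}. \<Sum>r<m. \<Sum>k<d. (yi * sg j * (dact q (vinner d (W j r) (\<lambda>k. yi * mu k)) * (yi * mu k)
            + dact q (vinner d (W j r) xv) * xv k) / real m)^2)
     \<le> 256 * q^2 * M2 * logloss (yi * fnet q m d W (\<lambda>k. yi * mu k) xv)"
proof -
  define Fp where "Fp = Fj q m d W 1 (\<lambda>k. yi * mu k) xv"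
  define Fm where "Fm = Fj q m d W (-1) (\<lambda>k. yi * mu k) xv"
  define z where "z = yi * fnet q m d W (\<lambda>k. yi * mu k) xv"
  define S where "S = (\<Sum>j\<in>{1,-1::int}. \<Sum>r<m. \<Sum>k<d. (yi * sg j * (dact q (vinner d (W j r) (\<lambda>k. yi * mu k)) * (yi * mu k)
            + dact q (vinner d (W j r) xv) * xv k) / real m)^2)"
  have M2: "M2 \<ge> 0" using vinner_sq_nonneg[of d mu] M by linarith
  have S: "S \<le> 2 * M2 * q^2 * (2 + Fp)^2 + 2 * M2 * q^2 * (2 + Fm)^2"
    unfolding S_def Fp_def Fm_def
    using r_sum_bound[OF q m yi _ M, of 1 W] r_sum_bound[OF q m yi _ M, of "-1" W] by simp
  have key: "(2 + Fp)^2 + (2 + Fm)^2 \<le> (8 + max z 0)^2"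
  proof -
    have Fp0: "Fp \<ge> 0" and Fm0: "Fm \<ge> 0" unfolding Fp_def Fm_def by (rule Fj_nonneg)+
    have zdef: "z = yi * (Fp - Fm)" unfolding z_def fnet_def Fp_def Fm_def by simp
    show ?thesis
    proof (cases "yi = 1")
      case True
      then have "Fm \<le> 2" using Fneg unfolding Fm_def by simp
      moreover have "z = Fp - Fm" using zdef True by simp
      ultimately have "2 + Fp \<le> 4 + max z 0" "2 + Fm \<le> 4" by auto
      then have "(2 + Fp)^2 \<le> (4 + max z 0)^2" "(2 + Fm)^2 \<le> 4^2"
        using Fp0 Fm0 by (intro power_mono; simp)+
      moreover have "(4 + max z 0)^2 + 4^2 \<le> (8 + max z 0)^2"
        by (simp add: power2_eq_square algebra_simps)
      ultimately show ?thesis by linarith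
    next
      case False
      then have yi': "yi = -1" using yi by auto
      then have "Fp \<le> 2" using Fneg unfolding Fp_def by simp
      moreover have "z = Fm - Fp" using zdef yi' by simp
      ultimately have "2 + Fm \<le> 4 + max z 0" "2 + Fp \<le> 4" by auto
      then have "(2 + Fm)^2 \<le> (4 + max z 0)^2" "(2 + Fp)^2 \<le> 4^2"
        using Fp0 Fm0 by (intro power_mono; simp)+
      moreover have "(4 + max z 0)^2 + 4^2 \<le> (8 + max z 0)^2"
        by (simp add: power2_eq_square algebra_simps)
      ultimately show ?thesis by linarith
    qed
  qed
  have "S \<le> 2 * M2 * q^2 * (8 + max z 0)^2"
  proof -
    have "2 * M2 * q^2 * ((2 + Fp)^2 + (2 + Fm)^2) \<le> 2 * M2 * q^2 * (8 + max z 0)^2"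
      using key M2 by (intro mult_left_mono) auto
    then show ?thesis using S by (simp add: algebra_simps)
  qed
  then have "(lp z)^2 * S \<le> (lp z)^2 * (2 * M2 * q^2 * (8 + max z 0)^2)"
    by (intro mult_left_mono) auto
  also have "\<dots> = 2 * M2 * q^2 * ((lp z)^2 * (8 + max z 0)^2)" by (simp add: algebra_simps)
  also have "\<dots> \<le> 2 * M2 * q^2 * (128 * logloss z)"
    using M2 by (intro mult_left_mono lp_sq_bound) auto
  finally show ?thesis unfolding S_def z_def by (simp add: algebra_simps)
qed


lemma sum_swap4:
  "(\<Sum>i\<in>I. \<Sum>j\<in>J. \<Sum>r\<in>R. \<Sum>k\<in>K. f i j r k) = (\<Sum>j\<in>J. \<Sum>r\<in>R. \<Sum>k\<in>K. \<Sum>i\<in>I. f i j r k)"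
proof -
  have "(\<Sum>i\<in>I. \<Sum>j\<in>J. \<Sum>r\<in>R. \<Sum>k\<in>K. f i j r k) = (\<Sum>j\<in>J. \<Sum>i\<in>I. \<Sum>r\<in>R. \<Sum>k\<in>K. f i j r k)"
    by (rule sum.swap)
  also have "\<dots> = (\<Sum>j\<in>J. \<Sum>r\<in>R. \<Sum>i\<in>I. \<Sum>k\<in>K. f i j r k)"
    by (rule sum.cong[OF refl], rule sum.swap)
  also have "\<dots> = (\<Sum>j\<in>J. \<Sum>r\<in>R. \<Sum>k\<in>K. \<Sum>i\<in>I. f i j r k)"
    by (rule sum.cong[OF refl], rule sum.cong[OF refl], rule sum.swap)
  finally show ?thesis .
qed

lemma avg_sq_le:
  fixes x :: "nat \<Rightarrow> real"
  assumes "n \<ge> 1"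
  shows "((1 / real n) * (\<Sum>i<n. x i))^2 \<le> (1 / real n) * (\<Sum>i<n. (x i)^2)"
proof -
  have "(\<Sum>i<n. x i)^2 \<le> (\<Sum>i<n. (x i)^2) * real n"
    using sum_squared_le_sum_of_squares[of x "{..<n}"] by simp
  then have "(\<Sum>i<n. x i)^2 / (real n)^2 \<le> (\<Sum>i<n. (x i)^2) * real n / (real n)^2"
    by (intro divide_right_mono) auto
  then show ?thesis using assms by (simp add: power2_eq_square power_divide field_simps)
qed

lemma grad_bound:
  assumes q: "q > 2" and m: "m \<ge> 1" and n: "n \<ge> 1"
    and y: "\<forall>i<n. y i = 1 \<or> y i = -1"
    and Mmu: "vinner d mu mu \<le> M2" and Mxi: "\<forall>i<n. vinner d (xi i) (xi i) \<le> M2"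
    and Fneg: "\<forall>i<n. Fj q m d W (if y i = 1 then -1 else 1) (\<lambda>k. y i * mu k) (xi i) \<le> 2"
  shows "frob2 m d (grad (LS q m d n y mu xi) W) \<le> 256 * q^2 * M2 * LS q m d n y mu xi W"
proof -
  define G where "G i j r k = y i * sg j * (dact q (vinner d (W j r) (\<lambda>k. y i * mu k)) * (y i * mu k)
            + dact q (vinner d (W j r) (xi i)) * xi i k) / real m" for i j r k
  define c where "c i = lp (y i * fnet q m d W (\<lambda>k. y i * mu k) (xi i))" for i
  have q1: "q > 1" using q by simp
  have g: "grad (LS q m d n y mu xi) W j r k = (1 / real n) * (\<Sum>i<n. c i * G i j r k)"
    if "j = 1 \<or> j = -1" "r < m" "k < d" for j r k
    unfolding grad_formula[OF q1 that(2,3,1)] c_def G_def by (simp add: algebra_simps)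
  have "frob2 m d (grad (LS q m d n y mu xi) W)
      = (\<Sum>j\<in>{1,-1::int}. \<Sum>r<m. \<Sum>k<d. ((1 / real n) * (\<Sum>i<n. c i * G i j r k))^2)"
    unfolding frob2_def by (intro sum.cong refl) (auto simp: g)
  also have "\<dots> \<le> (\<Sum>j\<in>{1,-1::int}. \<Sum>r<m. \<Sum>k<d. (1 / real n) * (\<Sum>i<n. (c i * G i j r k)^2))"
    by (intro sum_mono avg_sq_le n)
  also have "\<dots> = (1 / real n) * (\<Sum>j\<in>{1,-1::int}. \<Sum>r<m. \<Sum>k<d. \<Sum>i<n. (c i * G i j r k)^2)"
    by (simp only: sum_distrib_left)
  also have "\<dots> = (1 / real n) * (\<Sum>i<n. \<Sum>j\<in>{1,-1::int}. \<Sum>r<m. \<Sum>k<d. (c i * G i j r k)^2)"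
    by (rule arg_cong[where f="\<lambda>x. (1/real n) * x"], rule sum_swap4[symmetric])
  also have "\<dots> = (1 / real n) * (\<Sum>i<n. (c i)^2 * (\<Sum>j\<in>{1,-1::int}. \<Sum>r<m. \<Sum>k<d. (G i j r k)^2))"
    by (rule arg_cong[where f="\<lambda>x. (1/real n) * x"], rule sum.cong[OF refl], simp add: power_mult_distrib sum_distrib_left distrib_left)
  also have "\<dots> \<le> (1 / real n) * (\<Sum>i<n. 256 * q^2 * M2 * logloss (y i * fnet q m d W (\<lambda>k. y i * mu k) (xi i)))"
  proof (intro mult_left_mono sum_mono)
    fix i assume "i \<in> {..<n}"
    then have i: "i < n" by simp
    show "(c i)^2 * (\<Sum>j\<in>{1,-1::int}. \<Sum>r<m. \<Sum>k<d. (G i j r k)^2)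
        \<le> 256 * q^2 * M2 * logloss (y i * fnet q m d W (\<lambda>k. y i * mu k) (xi i))"
      unfolding c_def G_def
      using per_sample_bound[of q m "y i" d mu M2 "xi i" W] q m y Mmu Mxi Fneg i by simp
  qed auto
  also have "\<dots> = 256 * q^2 * M2 * LS q m d n y mu xi W"
    unfolding LS_def by (simp add: sum_distrib_left)
  finally show ?thesis .
qed



lemma vinner_scale: "vinner d u (\<lambda>k. c * v k) = c * vinner d u v"
  unfolding vinner_def by (simp add: sum_distrib_left algebra_simps)

lemma vinner_comm: "vinner d u v = vinner d v u"
  unfolding vinner_def by (simp add: mult.commute)

lemma lin_sum: "(\<Sum>k\<in>K. w * (P * f k + Q * g k)) = w * (P * sum f K + Q * sum g K)"
  for w P Q :: real
  by (simp add: sum.distrib sum_distrib_left distrib_left mult.assoc)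

lemma grad_sum_inner:
  "(\<Sum>k<d. ((1 / real n) * (\<Sum>i<n. c i * (A i * (yv i * mu k) + B i * x i k) / real m)) * v k)
   = (1 / real n) * (\<Sum>i<n. c i * (A i * yv i * vinner d mu v + B i * vinner d (x i) v) / real m)"
proof -
  have "(\<Sum>k<d. ((1 / real n) * (\<Sum>i<n. c i * (A i * (yv i * mu k) + B i * x i k) / real m)) * v k)
      = (\<Sum>k<d. \<Sum>i<n. (1 / real n) * (c i / real m) * (A i * yv i * (mu k * v k) + B i * (x i k * v k)))"
    by (rule sum.cong[OF refl]) (simp add: sum_distrib_left sum_distrib_right algebra_simps add_divide_distrib)
  also have "\<dots> = (\<Sum>i<n. \<Sum>k<d. (1 / real n) * (c i / real m) * (A i * yv i * (mu k * v k) + B i * (x i k * v k)))"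
    by (rule sum.swap)
  also have "\<dots> = (\<Sum>i<n. (1 / real n) * (c i / real m) * (A i * yv i * vinner d mu v + B i * vinner d (x i) v))"
    unfolding vinner_def by (rule sum.cong[OF refl], rule lin_sum)
  also have "\<dots> = (1 / real n) * (\<Sum>i<n. c i * (A i * yv i * vinner d mu v + B i * vinner d (x i) v) / real m)"
    by (simp add: sum_distrib_left)
  finally show ?thesis .
qed


locale dyn =
  fixes q :: real and m d n :: nat and mu :: "nat \<Rightarrow> real" and y :: "nat \<Rightarrow> real"
    and xi :: "nat \<Rightarrow> nat \<Rightarrow> real" and W0 :: "int \<Rightarrow> nat \<Rightarrow> nat \<Rightarrow> real" and eta :: real
  assumes q2: "q > 2" and m1: "m \<ge> 1" and n1: "n \<ge> 1" and eta_pos: "eta > 0"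
    and yy: "\<forall>i<n. y i = 1 \<or> y i = -1"
    and orth: "\<forall>i<n. vinner d (xi i) mu = 0"
    and xipos: "\<forall>i<n. vinner d (xi i) (xi i) > 0"
begin

abbreviation "L \<equiv> LS q m d n y mu xi"

definition Wt :: "nat \<Rightarrow> int \<Rightarrow> nat \<Rightarrow> nat \<Rightarrow> real" where
  "Wt t = gd L eta W0 t"

definition zz :: "nat \<Rightarrow> nat \<Rightarrow> real" where
  "zz t i = y i * fnet q m d (Wt t) (\<lambda>k. y i * mu k) (xi i)"

definition bb where "bb t j r i = vinner d (Wt t j r) (xi i)"
definition aa where "aa t j r i = vinner d (Wt t j r) (\<lambda>k. y i * mu k)"
definition nx where "nx i = vinner d (xi i) (xi i)"

definition rho :: "nat \<Rightarrow> int \<Rightarrow> nat \<Rightarrow> nat \<Rightarrow> real" where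
  "rho t j r i = (\<Sum>s<t. - eta * sg j / (real n * real m) * lp (zz s i) * dact q (bb s j r i) * y i * nx i)"

lemma q1: "q > 1" using q2 by simp

lemma upd_inner:
  assumes j: "j = 1 \<or> j = -1" and r: "r < m"
  shows "vinner d (Wt (Suc t) j r) v = vinner d (Wt t j r) v
     - eta * ((1 / real n) * (\<Sum>i<n. (lp (zz t i) * y i * sg j) *
          (dact q (aa t j r i) * y i * vinner d mu v + dact q (bb t j r i) * vinner d (xi i) v) / real m))"
proof -
  have "vinner d (Wt (Suc t) j r) v = (\<Sum>k<d. (Wt t j r k - eta * grad L (Wt t) j r k) * v k)"
    unfolding vinner_def Wt_def by simp
  also have "\<dots> = vinner d (Wt t j r) v - eta * (\<Sum>k<d. grad L (Wt t) j r k * v k)"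
    unfolding vinner_def by (simp add: algebra_simps sum_subtractf sum_distrib_left)
  also have "(\<Sum>k<d. grad L (Wt t) j r k * v k) = (\<Sum>k<d. ((1 / real n) * (\<Sum>i<n. (lp (zz t i) * y i * sg j) *
          (dact q (aa t j r i) * (y i * mu k) + dact q (bb t j r i) * xi i k) / real m)) * v k)"
    by (rule sum.cong[OF refl]) (simp add: grad_formula[OF q1 r _ j] zz_def aa_def bb_def Wt_def mult.assoc)
  also have "\<dots> = (1 / real n) * (\<Sum>i<n. (lp (zz t i) * y i * sg j) *
          (dact q (aa t j r i) * y i * vinner d mu v + dact q (bb t j r i) * vinner d (xi i) v) / real m)"
    by (rule grad_sum_inner)
  finally show ?thesis .
qed

lemma Wt0: "Wt 0 = W0" by (simp add: Wt_def)

lemma sg_sq: "j = 1 \<or> j = -1 \<Longrightarrow> sg j * sg j = 1" by (auto simp: sg_def)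

lemma y_sq: "i < n \<Longrightarrow> y i * y i = 1" using yy by auto

lemma sig_step:
  assumes j: "j = 1 \<or> j = -1" and r: "r < m"
  shows "sg j * vinner d (Wt (Suc t) j r) mu \<ge> sg j * vinner d (Wt t j r) mu"
proof -
  define V where "V = vinner d mu mu"
  have V0: "V \<ge> 0" unfolding V_def by (rule vinner_sq_nonneg)
  have tm: "sg j * ((lp (zz t i) * y i * sg j) * (dact q (aa t j r i) * y i * V + dact q (bb t j r i) * vinner d (xi i) mu) / real m) \<le> 0"
    if i: "i < n" for i
  proof -
    have "sg j * ((lp (zz t i) * y i * sg j) * (dact q (aa t j r i) * y i * V + dact q (bb t j r i) * vinner d (xi i) mu) / real m)
       = lp (zz t i) * (dact q (aa t j r i) * V) * ((sg j * sg j) * (y i * y i)) / real m"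
      using orth i by (simp add: algebra_simps)
    also have "\<dots> = lp (zz t i) * (dact q (aa t j r i) * V) / real m"
      using sg_sq[OF j] y_sq[OF i] by simp
    also have "\<dots> \<le> 0"
      using lp_neg[of "zz t i"] V0 dact_nonneg[of q "aa t j r i"] q2
      by (intro divide_nonpos_nonneg mult_nonpos_nonneg) auto
    finally show ?thesis .
  qed
  define S where "S = (\<Sum>i<n. (lp (zz t i) * y i * sg j) * (dact q (aa t j r i) * y i * V + dact q (bb t j r i) * vinner d (xi i) mu) / real m)"
  have "sg j * S \<le> 0"
    unfolding S_def sum_distrib_left by (intro sum_nonpos) (use tm in auto)
  have "sg j * (eta * ((1 / real n) * S)) = (eta * (1 / real n)) * (sg j * S)" by (simp add: algebra_simps)
  also have "\<dots> \<le> 0" by (rule mult_nonneg_nonpos) (use eta_pos \<open>sg j * S \<le> 0\<close> in auto)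
  finally have "sg j * (eta * ((1 / real n) * S)) \<le> 0" .
  then show ?thesis unfolding upd_inner[OF j r] V_def S_def by (simp add: algebra_simps)
qed

lemma sig_mono: assumes j: "j = 1 \<or> j = -1" and r: "r < m"
  shows "sg j * vinner d (Wt t j r) mu \<ge> sg j * vinner d (W0 j r) mu"
proof (induction t)
  case 0 then show ?case by (simp add: Wt0)
next
  case (Suc t) then show ?case using sig_step[OF j r, of t] by linarith
qed

lemma bb_step:
  assumes j: "j = 1 \<or> j = -1" and r: "r < m" and i0: "i0 < n"
  shows "bb (Suc t) j r i0 = bb t j r i0
     - eta * ((1 / real n) * (\<Sum>i<n. (lp (zz t i) * y i * sg j) * (dact q (bb t j r i) * vinner d (xi i) (xi i0)) / real m))"
proof -
  have mz: "vinner d mu (xi i0) = 0" using orth i0 vinner_comm by metis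
  show ?thesis unfolding bb_def upd_inner[OF j r] mz by simp
qed

lemma rho_Suc: "rho (Suc t) j r i = rho t j r i + (- eta * sg j / (real n * real m) * lp (zz t i) * dact q (bb t j r i) * y i * nx i)"
  unfolding rho_def by simp

lemma rho0: "rho 0 j r i = 0" unfolding rho_def by simp

lemma decomp:
  assumes j: "j = 1 \<or> j = -1" and r: "r < m" and i0: "i0 < n"
  shows "bb t j r i0 = bb 0 j r i0 + (\<Sum>i<n. rho t j r i * vinner d (xi i) (xi i0) / nx i)"
proof (induction t)
  case 0 then show ?case by (simp add: rho0)
next
  case (Suc t)
  have eq: "(\<Sum>i<n. rho (Suc t) j r i * vinner d (xi i) (xi i0) / nx i)
      = (\<Sum>i<n. rho t j r i * vinner d (xi i) (xi i0) / nx i)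
        + (\<Sum>i<n. (- eta * sg j / (real n * real m) * lp (zz t i) * dact q (bb t j r i) * y i * nx i) * vinner d (xi i) (xi i0) / nx i)"
    unfolding rho_Suc by (simp only: distrib_right add_divide_distrib sum.distrib)
  have eq2: "(\<Sum>i<n. (- eta * sg j / (real n * real m) * lp (zz t i) * dact q (bb t j r i) * y i * nx i) * vinner d (xi i) (xi i0) / nx i)
     = - eta * ((1 / real n) * (\<Sum>i<n. (lp (zz t i) * y i * sg j) * (dact q (bb t j r i) * vinner d (xi i) (xi i0)) / real m))"
  proof -
    have "(\<Sum>i<n. (- eta * sg j / (real n * real m) * lp (zz t i) * dact q (bb t j r i) * y i * nx i) * vinner d (xi i) (xi i0) / nx i)
       = (\<Sum>i<n. - eta * ((1 / real n) * ((lp (zz t i) * y i * sg j) * (dact q (bb t j r i) * vinner d (xi i) (xi i0)) / real m)))"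
    proof (rule sum.cong[OF refl])
      fix i assume "i \<in> {..<n}"
      then have "nx i > 0" using xipos unfolding nx_def by auto
      then show "(- eta * sg j / (real n * real m) * lp (zz t i) * dact q (bb t j r i) * y i * nx i) * vinner d (xi i) (xi i0) / nx i
         = - eta * ((1 / real n) * ((lp (zz t i) * y i * sg j) * (dact q (bb t j r i) * vinner d (xi i) (xi i0)) / real m))"
        by (simp add: field_simps)
    qed
    also have "\<dots> = - eta * ((1 / real n) * (\<Sum>i<n. (lp (zz t i) * y i * sg j) * (dact q (bb t j r i) * vinner d (xi i) (xi i0)) / real m))"
      by (simp add: sum_distrib_left)
    finally show ?thesis .
  qed
  show ?case unfolding bb_step[OF j r i0] eq eq2 using Suc by simp
qed

end



lemma v_le_exp_half: fixes v :: real assumes "v \<ge> 0" shows "v \<le> exp (v / 2)"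
proof -
  have "1 + v / 4 \<le> exp (v / 4)" by (rule exp_ge_add_one_self)
  then have "(1 + v / 4)^2 \<le> (exp (v / 4))^2" using assms by (intro power_mono) auto
  also have "(exp (v / 4))^2 = exp (v / 2)" by (simp add: power2_eq_square flip: exp_add)
  finally have "(1 + v/4)^2 \<le> exp (v / 2)" .
  moreover have "v \<le> (1 + v/4)^2"
  proof -
    have "0 \<le> (1 - v/4)^2" by simp
    then show ?thesis by (simp add: power2_eq_square algebra_simps)
  qed
  ultimately show ?thesis by linarith
qed

lemma vexp_le1: fixes v :: real assumes "v \<ge> 0" shows "v * exp (- v) \<le> 1"
proof -
  have "v \<le> exp v" using exp_ge_add_one_self[of v] by linarith
  then show ?thesis by (simp add: exp_minus field_simps)
qed

lemma vexp_le_half: fixes v :: real assumes "v \<ge> 0" shows "v * exp (- v) \<le> exp (- v / 2)"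
proof -
  have "v \<le> exp (v / 2)" using v_le_exp_half[OF assms] .
  then have "v * exp (- v) \<le> exp (v / 2) * exp (- v)" by (intro mult_right_mono) auto
  also have "exp (v / 2) * exp (- v) = exp (- v / 2)" by (simp flip: exp_add)
  finally show ?thesis .
qed

lemma dact_le_act: assumes "q \<ge> 1" "b \<ge> 1" shows "dact q b \<le> q * act q b"
proof -
  have "max 0 b powr (q - 1) \<le> max 0 b powr q" using assms by (intro powr_mono) auto
  then show ?thesis unfolding dact_def act_def using assms by (intro mult_left_mono) auto
qed

lemma K1: assumes q: "q \<ge> 1" and m: "m \<ge> (1::nat)"
  shows "dact q b / real m * exp (- (act q b / real m)) \<le> q"
proof (cases "b \<le> 1")
  case True
  have "dact q b / real m \<le> q"
  proof -
    have "dact q b / real m \<le> dact q b" using m dact_nonneg[of q b] q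
      by (simp add: divide_le_eq mult_le_cancel_left1)
    then show ?thesis using dact_le_q[OF q True] by linarith
  qed
  moreover have "exp (- (act q b / real m)) \<le> 1" using act_nonneg[of q b] by simp
  moreover have "dact q b / real m \<ge> 0" using dact_nonneg[of q b] q by simp
  ultimately show ?thesis by (metis mult_left_le mult.commute exp_ge_zero order_trans mult_right_mono mult_1)
next
  case False
  define v where "v = act q b / real m"
  have v0: "v \<ge> 0" unfolding v_def using act_nonneg by simp
  have "dact q b / real m \<le> q * v" unfolding v_def
    using dact_le_act[OF q, of b] False m by (simp add: divide_right_mono)
  then have "dact q b / real m * exp (- v) \<le> q * v * exp (- v)" by (intro mult_right_mono) auto
  also have "\<dots> \<le> q * 1" using vexp_le1[OF v0] q by (simp add: mult.assoc mult_left_mono)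
  finally show ?thesis by (simp add: v_def)
qed

lemma K2: assumes q: "q \<ge> 1" and m: "m \<ge> (1::nat)" and b: "b \<ge> 1"
  shows "dact q b / real m * exp (- (act q b / real m)) \<le> q * exp (- (act q b / real m) / 2)"
proof -
  define v where "v = act q b / real m"
  have v0: "v \<ge> 0" unfolding v_def using act_nonneg by simp
  have "dact q b / real m \<le> q * v" unfolding v_def
    using dact_le_act[OF q b] m by (simp add: divide_right_mono)
  then have "dact q b / real m * exp (- v) \<le> q * v * exp (- v)" by (intro mult_right_mono) auto
  also have "\<dots> \<le> q * exp (- v / 2)" using vexp_le_half[OF v0] q by (simp add: mult.assoc mult_left_mono)
  finally show ?thesis by (simp add: v_def)
qed

lemma act_ge_sq: assumes "q \<ge> 2" "b \<ge> 1" shows "act q b \<ge> b^2"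
proof -
  have "b powr 2 \<le> b powr q" using assms by (intro powr_mono) auto
  then show ?thesis using assms by (simp add: act_def max_def powr_numeral)
qed



locale dyn2 = dyn +
  fixes Bx K R H T :: real
  assumes bmu: "\<forall>j\<in>{1,-1}. \<forall>r<m. \<bar>vinner d (W0 j r) mu\<bar> \<le> 1"
   and bxi: "\<forall>j\<in>{1,-1}. \<forall>r<m. \<forall>i<n. \<bar>vinner d (W0 j r) (xi i)\<bar> \<le> Bx"
   and kap: "\<forall>i<n. \<forall>i'<n. i' \<noteq> i \<longrightarrow> \<bar>vinner d (xi i') (xi i)\<bar> / vinner d (xi i') (xi i') \<le> K"
   and B0a: "Bx + real n * R * K \<le> 1/2"
   and K0: "K \<ge> 0"
   and R4: "R \<ge> 4"
   and Hb: "\<forall>i<n. eta * vinner d (xi i) (xi i) \<le> H"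
   and Hs: "exp 2 * q * H \<le> 1/2"
   and TT: "T * (exp 2 * q * H * exp (-(R^2/(8*real m)))) \<le> 1/2"
begin

definition "eps1 = exp 2 * q * H * exp (-(R^2/(8*real m)))"
definition "B0 = Bx + real n * R * K"

definition Inv :: "nat \<Rightarrow> bool" where
  "Inv t = (\<forall>j\<in>{1,-1}. \<forall>r<m. \<forall>i<n.
     (sg j = y i \<longrightarrow> 0 \<le> rho t j r i \<and> rho t j r i \<le> R - 1/2 + real t * eps1) \<and>
     (sg j \<noteq> y i \<longrightarrow> - B0 - q * H \<le> rho t j r i \<and> rho t j r i \<le> 0))"

lemma H0: "H \<ge> 0"
proof -
  have "eta * vinner d (xi 0) (xi 0) > 0" using xipos n1 eta_pos by simp
  moreover have "eta * vinner d (xi 0) (xi 0) \<le> H" using Hb n1 by simp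
  ultimately show ?thesis by linarith
qed

lemma qH: "q * H \<le> 1/2"
proof -
  have qh0: "q * H \<ge> 0" using q2 H0 by simp
  have "1 * (q * H) \<le> exp 2 * (q * H)" by (rule mult_right_mono) (use qh0 in auto)
  then have "q * H \<le> exp 2 * (q * H)" by simp
  then show ?thesis using Hs by (simp add: mult.assoc)
qed

lemma eps1_nonneg: "eps1 \<ge> 0" unfolding eps1_def using q2 H0 by simp

lemma Bx0: "Bx \<ge> 0" using bxi n1 m1 by (meson abs_ge_zero order_trans insertI1 less_le_trans zero_less_one)

lemma B0_le: "B0 \<le> 1/2" using B0a unfolding B0_def .
lemma B0_ge: "B0 \<ge> 0" unfolding B0_def using Bx0 K0 R4 by simp

lemma nx_pos: "i < n \<Longrightarrow> nx i > 0" using xipos unfolding nx_def by auto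

lemma rho_abs:
  assumes I: "Inv t" and te: "real t * eps1 \<le> 1/2" and j: "j \<in> {1,-1}" and r: "r < m" and i: "i < n"
  shows "\<bar>rho t j r i\<bar> \<le> R"
proof (cases "sg j = y i")
  case True
  then show ?thesis using I j r i te R4 unfolding Inv_def by fastforce
next
  case False
  then have "- B0 - q * H \<le> rho t j r i \<and> rho t j r i \<le> 0" using I j r i unfolding Inv_def by blast
  then show ?thesis using B0_le qH R4 by linarith
qed

lemma near:
  assumes I: "Inv t" and te: "real t * eps1 \<le> 1/2" and j: "j \<in> {1,-1}" and r: "r < m" and i0: "i0 < n"
  shows "\<bar>bb t j r i0 - rho t j r i0\<bar> \<le> B0"
proof -
  define f where "f i = rho t j r i * vinner d (xi i) (xi i0) / nx i" for i
  have jj: "j = 1 \<or> j = -1" using j by auto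
  have dec: "bb t j r i0 = bb 0 j r i0 + (\<Sum>i<n. f i)" unfolding f_def by (rule decomp[OF jj r i0])
  have "(\<Sum>i<n. f i) = f i0 + (\<Sum>i\<in>{..<n} - {i0}. f i)"
    using i0 by (subst sum.remove[of "{..<n}" i0]) auto
  moreover have "f i0 = rho t j r i0" unfolding f_def using nx_pos[OF i0] by (simp add: nx_def)
  moreover have "\<bar>\<Sum>i\<in>{..<n} - {i0}. f i\<bar> \<le> real n * R * K"
  proof -
    have "\<bar>\<Sum>i\<in>{..<n} - {i0}. f i\<bar> \<le> (\<Sum>i\<in>{..<n} - {i0}. \<bar>f i\<bar>)" by (rule sum_abs)
    also have "\<dots> \<le> (\<Sum>i\<in>{..<n} - {i0}. R * K)"
    proof (rule sum_mono)
      fix i assume "i \<in> {..<n} - {i0}"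
      then have i: "i < n" "i \<noteq> i0" by auto
      have "\<bar>f i\<bar> = \<bar>rho t j r i\<bar> * (\<bar>vinner d (xi i) (xi i0)\<bar> / nx i)"
        unfolding f_def using nx_pos[OF i(1)] by (simp add: abs_mult)
      also have "\<dots> \<le> R * K"
        using rho_abs[OF I te j r i(1)] kap i0 i xipos unfolding nx_def
        by (intro mult_mono) auto
      finally show "\<bar>f i\<bar> \<le> R * K" .
    qed
    also have "\<dots> = real (n - 1) * (R * K)" using i0 by simp
    also have "\<dots> \<le> real n * (R * K)" using R4 K0 by (intro mult_right_mono) auto
    finally show ?thesis by (simp add: mult.assoc)
  qed
  moreover have "\<bar>bb 0 j r i0\<bar> \<le> Bx" unfolding bb_def Wt0 using bxi j r i0 by blast
  ultimately show ?thesis unfolding dec B0_def by linarith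
qed

definition jneg :: "nat \<Rightarrow> int" where "jneg i = (if y i = 1 then -1 else 1)"
definition jpos :: "nat \<Rightarrow> int" where "jpos i = (if y i = 1 then 1 else -1)"

lemma jneg_mem: "jneg i \<in> {1,-1}" unfolding jneg_def by auto
lemma jpos_mem: "jpos i \<in> {1,-1}" unfolding jpos_def by auto
lemma sg_jneg: "i < n \<Longrightarrow> sg (jneg i) = - y i" using yy unfolding jneg_def sg_def by auto
lemma sg_jpos: "i < n \<Longrightarrow> sg (jpos i) = y i" using yy unfolding jpos_def sg_def by auto

lemma sg_eq_jpos: "j \<in> {1,-1} \<Longrightarrow> i < n \<Longrightarrow> sg j = y i \<Longrightarrow> j = jpos i"
  using yy unfolding jpos_def sg_def by (auto split: if_splits)

lemma zz_eq: "i < n \<Longrightarrow> zz t i = Fj q m d (Wt t) (jpos i) (\<lambda>k. y i * mu k) (xi i) - Fj q m d (Wt t) (jneg i) (\<lambda>k. y i * mu k) (xi i)"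
  using yy unfolding zz_def fnet_def jpos_def jneg_def by auto

lemma Fneg:
  assumes I: "Inv t" and te: "real t * eps1 \<le> 1/2" and i: "i < n"
  shows "Fj q m d (Wt t) (jneg i) (\<lambda>k. y i * mu k) (xi i) \<le> 2"
proof -
  let ?j = "jneg i"
  have jj: "?j = 1 \<or> ?j = -1" using jneg_mem by auto
  have each: "act q (vinner d (Wt t ?j r) (\<lambda>k. y i * mu k)) + act q (vinner d (Wt t ?j r) (xi i)) \<le> 2"
    if r: "r < m" for r
  proof -
    have "vinner d (Wt t ?j r) (\<lambda>k. y i * mu k) = - (sg ?j * vinner d (Wt t ?j r) mu)"
      using sg_jneg[OF i] by (simp add: vinner_scale)
    also have "\<dots> \<le> - (sg ?j * vinner d (W0 ?j r) mu)" using sig_mono[OF jj r, of t] by linarith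
    also have "\<dots> \<le> 1"
    proof -
      have "\<bar>vinner d (W0 ?j r) mu\<bar> \<le> 1" using bmu jneg_mem r by blast
      moreover have "\<bar>sg ?j\<bar> = 1" using jj by (auto simp: sg_def)
      moreover have "- (sg ?j * vinner d (W0 ?j r) mu) \<le> \<bar>sg ?j * vinner d (W0 ?j r) mu\<bar>" by linarith
      moreover have "\<bar>sg ?j * vinner d (W0 ?j r) mu\<bar> = \<bar>sg ?j\<bar> * \<bar>vinner d (W0 ?j r) mu\<bar>" by (rule abs_mult)
      ultimately show ?thesis by simp
    qed
    finally have a1: "vinner d (Wt t ?j r) (\<lambda>k. y i * mu k) \<le> 1" .
    have "sg ?j \<noteq> y i" using sg_jneg[OF i] yy i by auto
    then have "rho t ?j r i \<le> 0" using I jneg_mem r i unfolding Inv_def by blast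
    moreover have "\<bar>bb t ?j r i - rho t ?j r i\<bar> \<le> B0" by (rule near[OF I te jneg_mem r i])
    ultimately have "bb t ?j r i \<le> 1" using B0_le by linarith
    then have b1: "vinner d (Wt t ?j r) (xi i) \<le> 1" unfolding bb_def .
    show ?thesis using act_le1[of q, OF _ a1] act_le1[of q, OF _ b1] q2 by linarith
  qed
  have "(\<Sum>r<m. act q (vinner d (Wt t ?j r) (\<lambda>k. y i * mu k)) + act q (vinner d (Wt t ?j r) (xi i))) \<le> (\<Sum>r<m. 2)"
    by (rule sum_mono) (use each in auto)
  then have "(1 / real m) * (\<Sum>r<m. act q (vinner d (Wt t ?j r) (\<lambda>k. y i * mu k)) + act q (vinner d (Wt t ?j r) (xi i))) \<le> (1 / real m) * (2 * real m)"
    by (intro mult_left_mono) auto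
  then show ?thesis unfolding Fj_def using m1 by simp
qed

lemma lp_bound:
  assumes I: "Inv t" and te: "real t * eps1 \<le> 1/2" and i: "i < n" and r: "r < m"
  shows "\<bar>lp (zz t i)\<bar> \<le> exp 2 * exp (- (act q (bb t (jpos i) r i) / real m))"
proof -
  let ?j = "jpos i"
  have "act q (bb t ?j r i) / real m \<le> Fj q m d (Wt t) ?j (\<lambda>k. y i * mu k) (xi i)"
  proof -
    have "act q (bb t ?j r i) \<le> act q (vinner d (Wt t ?j r) (\<lambda>k. y i * mu k)) + act q (vinner d (Wt t ?j r) (xi i))"
      unfolding bb_def using act_nonneg by simp
    also have "\<dots> \<le> (\<Sum>r<m. act q (vinner d (Wt t ?j r) (\<lambda>k. y i * mu k)) + act q (vinner d (Wt t ?j r) (xi i)))"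
    proof (rule member_le_sum[where f="\<lambda>r. act q (vinner d (Wt t ?j r) (\<lambda>k. y i * mu k)) + act q (vinner d (Wt t ?j r) (xi i))"])
      show "r \<in> {..<m}" using r by simp
      show "finite {..<m::nat}" by simp
      fix x show "0 \<le> act q (vinner d (Wt t ?j x) (\<lambda>k. y i * mu k)) + act q (vinner d (Wt t ?j x) (xi i))"
        using act_nonneg by (simp add: add_nonneg_nonneg)
    qed
    finally show ?thesis unfolding Fj_def by (simp add: divide_right_mono)
  qed
  then have "zz t i \<ge> act q (bb t ?j r i) / real m - 2"
    using zz_eq[OF i, of t] Fneg[OF I te i] by linarith
  then have "exp (- zz t i) \<le> exp (2 - act q (bb t ?j r i) / real m)" by simp
  also have "\<dots> = exp 2 * exp (- (act q (bb t ?j r i) / real m))" by (simp flip: exp_add)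
  finally show ?thesis using abs_lp_le_exp[of "zz t i"] by linarith
qed

lemma div_m_le: "0 \<le> x \<Longrightarrow> x / real m \<le> x"
proof -
  assume x: "0 \<le> x"
  have "1 / real m \<le> 1" using m1 by simp
  then have "x * (1 / real m) \<le> x * 1" using x by (rule mult_left_mono)
  then show ?thesis by simp
qed

definition delta where
  "delta t j r i = - eta * sg j / (real n * real m) * lp (zz t i) * dact q (bb t j r i) * y i * nx i"

lemma rho_Suc': "rho (Suc t) j r i = rho t j r i + delta t j r i"
  unfolding delta_def by (rule rho_Suc)

lemma delta_eq: "delta t j r i = - (sg j * y i) * ((eta * nx i) / real n) * (lp (zz t i) * (dact q (bb t j r i) / real m))"
  unfolding delta_def using m1 n1 by (simp add: field_simps)

lemma P_bounds: assumes i: "i < n" shows "0 \<le> (eta * nx i) / real n" "(eta * nx i) / real n \<le> H"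
proof -
  have p: "eta * nx i > 0" using eta_pos nx_pos[OF i] by simp
  then show "0 \<le> (eta * nx i) / real n" by simp
  have "(eta * nx i) / real n \<le> eta * nx i" using p n1 by (simp add: divide_le_eq mult_le_cancel_left1)
  also have "\<dots> \<le> H" using Hb i unfolding nx_def by simp
  finally show "(eta * nx i) / real n \<le> H" .
qed

lemma step_pos:
  assumes I: "Inv t" and te: "real t * eps1 \<le> 1/2" and i: "i < n" and r: "r < m"
  shows "0 \<le> delta t (jpos i) r i" "delta t (jpos i) r i \<le> exp 2 * q * H"
    "bb t (jpos i) r i \<ge> R / 2 \<Longrightarrow> delta t (jpos i) r i \<le> eps1"
proof -
  let ?j = "jpos i"
  let ?P = "(eta * nx i) / real n"
  let ?b = "bb t ?j r i"
  have s1: "sg ?j * y i = 1" using sg_jpos[OF i] y_sq[OF i] by simp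
  have de: "delta t ?j r i = ?P * (\<bar>lp (zz t i)\<bar> * (dact q ?b / real m))"
    unfolding delta_eq s1 using lp_neg[of "zz t i"] by simp
  have P0: "0 \<le> ?P" and PH: "?P \<le> H" using P_bounds[OF i] by auto
  have dm0: "0 \<le> dact q ?b / real m" using dact_nonneg[of q ?b] q2 by simp
  show "0 \<le> delta t ?j r i" unfolding de by (intro mult_nonneg_nonneg) (use P0 dm0 in auto)
  have Q: "\<bar>lp (zz t i)\<bar> * (dact q ?b / real m) \<le> exp 2 * (dact q ?b / real m * exp (- (act q ?b / real m)))"
  proof -
    define Dm where "Dm = dact q ?b / real m"
    define X where "X = exp (- (act q ?b / real m))"
    have "\<bar>lp (zz t i)\<bar> * Dm \<le> (exp 2 * X) * Dm"
      using mult_right_mono[OF lp_bound[OF I te i r] dm0] unfolding Dm_def X_def .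
    moreover have "(exp 2 * X) * Dm = exp 2 * (Dm * X)" by (simp add: mult_ac)
    ultimately have "\<bar>lp (zz t i)\<bar> * Dm \<le> exp 2 * (Dm * X)" by simp
    then show ?thesis by (simp only: Dm_def X_def)
  qed
  have Q1: "\<bar>lp (zz t i)\<bar> * (dact q ?b / real m) \<le> exp 2 * q"
    using Q K1[of q m ?b] q2 m1 by (smt (verit, best) exp_gt_zero mult_left_mono)
  have Q0: "0 \<le> \<bar>lp (zz t i)\<bar> * (dact q ?b / real m)" by (intro mult_nonneg_nonneg) (use dm0 in auto)
  have "delta t ?j r i \<le> H * (exp 2 * q)"
    unfolding de by (rule mult_mono[OF PH Q1]) (use H0 Q0 in auto)
  then show "delta t ?j r i \<le> exp 2 * q * H" by (simp add: algebra_simps)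
  assume bR: "?b \<ge> R / 2"
  have b1: "?b \<ge> 1" using bR R4 by linarith
  have "act q ?b \<ge> ?b^2" using act_ge_sq[of q ?b] q2 b1 by simp
  moreover have "?b^2 \<ge> (R/2)^2" using bR R4 by (intro power_mono) auto
  ultimately have "act q ?b / real m / 2 \<ge> R^2 / (8 * real m)"
    using m1 by (simp add: power_divide field_simps)
  then have ex: "exp (- (act q ?b / real m) / 2) \<le> exp (- (R^2 / (8 * real m)))" by simp
  have "\<bar>lp (zz t i)\<bar> * (dact q ?b / real m) \<le> exp 2 * (q * exp (- (act q ?b / real m) / 2))"
    using Q K2[of q m ?b] q2 m1 b1 by (smt (verit, best) exp_gt_zero mult_left_mono)
  also have "\<dots> \<le> exp 2 * (q * exp (- (R^2 / (8 * real m))))"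
    using ex q2 by (intro mult_left_mono) auto
  finally have Q2: "\<bar>lp (zz t i)\<bar> * (dact q ?b / real m) \<le> exp 2 * (q * exp (- (R^2 / (8 * real m))))" .
  have "delta t ?j r i \<le> H * (exp 2 * (q * exp (- (R^2 / (8 * real m)))))"
    unfolding de by (rule mult_mono[OF PH Q2]) (use H0 Q0 in auto)
  then show "delta t ?j r i \<le> eps1" unfolding eps1_def by (simp add: algebra_simps)
qed

lemma step_neg:
  assumes j: "j \<in> {1,-1}" and i: "i < n" and ne: "sg j \<noteq> y i"
  shows "delta t j r i \<le> 0" "bb t j r i \<le> 0 \<Longrightarrow> delta t j r i = 0"
    "bb t j r i \<le> 1 \<Longrightarrow> delta t j r i \<ge> - (q * H)"
proof -
  let ?P = "(eta * nx i) / real n"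
  let ?b = "bb t j r i"
  have s1: "sg j * y i = -1" using j ne yy i by (auto simp: sg_def)
  have de: "delta t j r i = ?P * (lp (zz t i) * (dact q ?b / real m))"
    unfolding delta_eq s1 by simp
  have P0: "0 \<le> ?P" and PH: "?P \<le> H" using P_bounds[OF i] by auto
  have dm0: "0 \<le> dact q ?b / real m" using dact_nonneg[of q ?b] q2 by simp
  show "delta t j r i \<le> 0" unfolding de using P0 dm0 lp_neg[of "zz t i"]
    by (intro mult_nonneg_nonpos mult_nonpos_nonneg) auto
  show "?b \<le> 0 \<Longrightarrow> delta t j r i = 0" unfolding de by (simp add: dact_nonpos)
  assume b1: "?b \<le> 1"
  have "dact q ?b / real m \<le> q"
  proof -
    have "dact q ?b / real m \<le> dact q ?b" using dact_nonneg[of q ?b] q2 by (intro div_m_le) auto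
    then show ?thesis using dact_le_q[of q ?b] q2 b1 by linarith
  qed
  then have "\<bar>lp (zz t i)\<bar> * (dact q ?b / real m) \<le> 1 * q"
    using abs_lp_le1[of "zz t i"] dm0 by (intro mult_mono) auto
  then have "\<bar>?P * (lp (zz t i) * (dact q ?b / real m))\<bar> \<le> H * q"
  proof -
    assume a: "\<bar>lp (zz t i)\<bar> * (dact q ?b / real m) \<le> 1 * q"
    define Dm where "Dm = dact q ?b / real m"
    define P where "P = ?P"
    define lz where "lz = lp (zz t i)"
    have P0': "P \<ge> 0" and Dm0: "Dm \<ge> 0" using P0 dm0 unfolding P_def Dm_def by auto
    have "\<bar>P * (lz * Dm)\<bar> = P * (\<bar>lz\<bar> * Dm)" using P0' Dm0 by (simp add: abs_mult)
    have Q0: "0 \<le> \<bar>lz\<bar> * Dm" using Dm0 by simp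
    have a': "\<bar>lz\<bar> * Dm \<le> q" using a unfolding lz_def Dm_def by simp
    have PH': "P \<le> H" using PH unfolding P_def .
    have "P * (\<bar>lz\<bar> * Dm) \<le> H * q" by (rule mult_mono[OF PH' a']) (use H0 Q0 in auto)
    then have "\<bar>P * (lz * Dm)\<bar> \<le> H * q" using \<open>\<bar>P * (lz * Dm)\<bar> = P * (\<bar>lz\<bar> * Dm)\<close> by simp
    then show ?thesis by (simp only: P_def Dm_def lz_def)
  qed
  then have "- (H * q) \<le> ?P * (lp (zz t i) * (dact q ?b / real m))"
    using abs_ge_minus_self[of "?P * (lp (zz t i) * (dact q ?b / real m))"] by linarith
  then show "delta t j r i \<ge> - (q * H)" unfolding de by (simp add: mult.commute)
qed

lemma Inv0: "Inv 0"
proof -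
  have "q * H \<ge> 0" using q2 H0 by simp
  then show ?thesis unfolding Inv_def using rho0 R4 B0_ge by auto
qed

lemma Inv_step:
  assumes I: "Inv t" and te1: "real (Suc t) * eps1 \<le> 1/2"
  shows "Inv (Suc t)"
proof -
  have te: "real t * eps1 \<le> 1/2" using te1 eps1_nonneg by (simp add: algebra_simps)
  show ?thesis unfolding Inv_def
  proof (intro ballI allI impI conjI)
    fix j r i assume j: "j \<in> {1,-1::int}" and r: "r < m" and i: "i < n"
    { assume e: "sg j = y i"
      then have jp: "j = jpos i" using sg_eq_jpos j i by blast
      have old: "0 \<le> rho t j r i" "rho t j r i \<le> R - 1/2 + real t * eps1" using I j r i e unfolding Inv_def by blast+
      have d0: "0 \<le> delta t j r i" and dH: "delta t j r i \<le> exp 2 * q * H"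
        using step_pos[OF I te i r] jp by auto
      show "0 \<le> rho (Suc t) j r i" unfolding rho_Suc' using old d0 by linarith
      show "rho (Suc t) j r i \<le> R - 1/2 + real (Suc t) * eps1"
      proof (cases "rho t j r i \<le> R - 1")
        case True
        have "delta t j r i \<le> 1/2" using dH Hs by linarith
        moreover have "real (Suc t) * eps1 \<ge> 0" using eps1_nonneg by simp
        ultimately show ?thesis unfolding rho_Suc' using True by linarith
      next
        case False
        have "\<bar>bb t j r i - rho t j r i\<bar> \<le> B0" by (rule near[OF I te j r i])
        then have "bb t j r i \<ge> R / 2" using False B0_le R4 by linarith
        then have "delta t j r i \<le> eps1" using step_pos(3)[OF I te i r] jp by auto
        then show ?thesis unfolding rho_Suc' using old by (simp add: algebra_simps)
      qed }
    { assume e: "sg j \<noteq> y i"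
      have old: "- B0 - q * H \<le> rho t j r i" "rho t j r i \<le> 0" using I j r i e unfolding Inv_def by blast+
      have nb: "\<bar>bb t j r i - rho t j r i\<bar> \<le> B0" by (rule near[OF I te j r i])
      show "rho (Suc t) j r i \<le> 0" unfolding rho_Suc' using old step_neg(1)[OF j i e, of t r] by linarith
      show "- B0 - q * H \<le> rho (Suc t) j r i"
      proof (cases "rho t j r i < - B0")
        case True
        then have "bb t j r i \<le> 0" using nb by linarith
        then have "delta t j r i = 0" using step_neg(2)[OF j i e] by blast
        then show ?thesis unfolding rho_Suc' using old by simp
      next
        case False
        then have "bb t j r i \<le> 1" using nb old B0_le by linarith
        then have "delta t j r i \<ge> - (q * H)" using step_neg(3)[OF j i e] by blast
        then show ?thesis unfolding rho_Suc' using False by linarith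
      qed }
  qed
qed

lemma Inv_all: "real t * eps1 \<le> 1/2 \<Longrightarrow> Inv t"
proof (induction t)
  case 0 show ?case by (rule Inv0)
next
  case (Suc t)
  have "real t * eps1 \<le> 1/2" using Suc.prems eps1_nonneg by (simp add: algebra_simps)
  then show ?case using Suc Inv_step by blast
qed

lemma final_bound:
  assumes t: "real t \<le> T" and M: "vinner d mu mu \<le> M2" "\<forall>i<n. vinner d (xi i) (xi i) \<le> M2"
  shows "frob2 m d (grad L (Wt t)) \<le> 256 * q^2 * M2 * L (Wt t)"
proof -
  have te: "real t * eps1 \<le> 1/2"
    using mult_right_mono[OF t eps1_nonneg] TT unfolding eps1_def by linarith
  have I: "Inv t" by (rule Inv_all[OF te])
  show ?thesis
  proof (rule grad_bound[OF q2 m1 n1 yy M(1) M(2)])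
    show "\<forall>i<n. Fj q m d (Wt t) (if y i = 1 then -1 else 1) (\<lambda>k. y i * mu k) (xi i) \<le> 2"
      using Fneg[OF I te] unfolding jneg_def by blast
  qed
qed

end



lemma ln8: "ln (8::real) \<le> 3"
proof -
  have "ln ((2::real)^3) = real 3 * ln 2" by (rule ln_realpow)
  then have "ln (8::real) = 3 * ln 2" by simp
  then show ?thesis using ln_2_less_1 by simp
qed

lemma ln4: "ln (4::real) \<le> 2"
proof -
  have "ln ((2::real)^2) = real 2 * ln 2" by (rule ln_realpow)
  then have "ln (4::real) = 2 * ln 2" by simp
  then show ?thesis using ln_2_less_1 by simp
qed

lemma exp2_le: "exp (2::real) \<le> 9"
proof -
  have "exp (2::real) = exp 1 * exp 1" by (simp flip: exp_add)
  also have "\<dots> \<le> 3 * 3" using exp_le by (intro mult_mono) auto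
  finally show ?thesis by simp
qed

lemma sqrt_le_lin: assumes "x \<le> a * L" "L \<ge> 1" "a \<ge> 0" "b \<ge> 0" "a \<le> b^2"
  shows "sqrt x \<le> b * L"
proof -
  have "x \<le> b^2 * L^2"
  proof -
    have "a * L \<le> b^2 * L" using assms by (intro mult_right_mono) auto
    also have "\<dots> \<le> b^2 * L^2" using assms by (intro mult_left_mono) (auto simp: power2_eq_square)
    finally show ?thesis using assms by linarith
  qed
  then have "sqrt x \<le> sqrt ((b * L)^2)" by (simp add: power_mult_distrib)
  also have "\<dots> = b * L" using assms by simp
  finally show ?thesis .
qed

lemma vinner_pos: assumes "\<exists>k<d. mu k \<noteq> 0" shows "vinner d mu mu > 0"
proof -
  obtain k where k: "k < d" "mu k \<noteq> 0" using assms by blast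
  have "mu k * mu k \<le> (\<Sum>k<d. mu k * mu k)"
    using k by (intro member_le_sum) auto
  moreover have "mu k * mu k > 0" using k(2) by (cases "mu k > 0") (auto simp: mult_pos_pos mult_neg_neg)
  ultimately show ?thesis unfolding vinner_def by linarith
qed

lemma vnorm_sq: "(vnorm d u)^2 = vinner d u u"
  unfolding vnorm_def using vinner_sq_nonneg by simp


lemma main_core:
  fixes q :: real and m d n :: nat and mu :: "nat \<Rightarrow> real" and sigp sgz eta \<delta> Tstar Lam :: real
    and y :: "nat \<Rightarrow> real" and xi :: "nat \<Rightarrow> nat \<Rightarrow> real" and Wz :: "int \<Rightarrow> nat \<Rightarrow> nat \<Rightarrow> real"
  assumes q2: "q > 2" and m1: "m \<ge> 1" and n1: "n \<ge> 1" and mu0: "\<exists>k<d. mu k \<noteq> 0"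
    and sp: "sigp > 0" and s0: "sgz > 0" and et: "eta > 0" and de0: "0 < \<delta>" and de1: "\<delta> < 1"
    and yy: "\<forall>i<n. y i = 1 \<or> y i = -1" and orth: "\<forall>i<n. vinner d (xi i) mu = 0"
    and Lam: "Lam = ln (exp 1 + real m + real n + real d + 1 / \<delta> + Tstar)" and T0: "Tstar \<ge> 0"
    and c1: "real d \<ge> 200000 * q * Lam powr 2 * real m powr (max 2 (4 / (q - 2)))
                                  * real n powr (max 4 ((2 * q - 2) / (q - 2)))"
    and c3: "eta \<le> 1 / (200000 * q * Lam powr 2) * min (1 / (vnorm d mu)\<^sup>2) (1 / (sigp\<^sup>2 * real d))"
    and c4: "sgz \<le> 1 / (200000 * q * Lam powr 2) * real m powr (- 2 / (q - 2)) * real n powr (- max (1 / (q - 2)) 1)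
               * min (1 / (sigp * sqrt (real d))) (1 / vnorm d mu)"
    and E: "E_prelim \<delta> m d n sigp sgz y mu xi Wz"
  shows "\<forall>t. real t \<le> Tstar \<longrightarrow>
         frob2 m d (grad (LS q m d n y mu xi) (gd (LS q m d n y mu xi) eta Wz t))
           \<le> 384 * q^2 * max ((vnorm d mu)\<^sup>2) (sigp\<^sup>2 * real d) * LS q m d n y mu xi (gd (LS q m d n y mu xi) eta Wz t)"
proof -
  define S where "S = exp 1 + real m + real n + real d + 1 / \<delta> + Tstar"
  define Cq where "Cq = 200000 * q"
  have Cq: "Cq \<ge> 400000" using q2 unfolding Cq_def by simp
  have d1: "d \<ge> 1" using mu0 by (metis less_one not_less not_less_zero)
  have Spos: "S > 0" unfolding S_def using de0 T0 by (simp add: add_pos_nonneg)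
  have LamS: "Lam = ln S" unfolding Lam S_def ..
  have Lam1: "Lam \<ge> 1"
  proof -
    have "exp 1 \<le> S" unfolding S_def using de0 T0 by simp
    then show ?thesis unfolding LamS using Spos by (simp add: ln_ge_iff)
  qed
  have lnm: "ln (real m) \<le> Lam" unfolding LamS using m1 Spos by (simp add: S_def) (smt (verit) de0 T0 divide_pos_pos exp_gt_zero of_nat_0_le_iff)
  have lnn: "ln (real n) \<le> Lam" unfolding LamS using n1 Spos by (simp add: S_def) (smt (verit) de0 T0 divide_pos_pos exp_gt_zero of_nat_0_le_iff)
  have lnde: "ln (1 / \<delta>) \<le> Lam" unfolding LamS using de0 Spos by (simp add: S_def) (smt (verit) T0 exp_gt_zero of_nat_0_le_iff)
  have TS: "Tstar \<le> exp Lam" unfolding LamS using Spos by (simp add: S_def) (smt (verit) de0 divide_pos_pos exp_gt_zero of_nat_0_le_iff)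
  have mpos: "real m > 0" and npos: "real n > 0" using m1 n1 by auto
  have ln1: "ln (8 * real m / \<delta>) \<le> 5 * Lam"
  proof -
    have "ln (8 * real m / \<delta>) = ln 8 + ln (real m) + ln (1 / \<delta>)"
      using mpos de0 by (simp add: ln_mult ln_div)
    then show ?thesis using ln8 lnm lnde Lam1 by linarith
  qed
  have ln2: "ln (8 * real m * real n / \<delta>) \<le> 6 * Lam"
  proof -
    have "ln (8 * real m * real n / \<delta>) = ln 8 + ln (real m) + ln (real n) + ln (1 / \<delta>)"
      using mpos npos de0 by (simp add: ln_mult ln_div)
    then show ?thesis using ln8 lnm lnn lnde Lam1 by linarith
  qed
  have ln3: "ln (4 * real n ^ 2 / \<delta>) \<le> 5 * Lam"
  proof -
    have "ln (4 * real n ^ 2 / \<delta>) = ln 4 + 2 * ln (real n) + ln (1 / \<delta>)"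
      using npos de0 by (simp add: ln_mult ln_div ln_realpow)
    then show ?thesis using ln4 lnn lnde Lam1 by linarith
  qed
  have ln3pos: "ln (4 * real n ^ 2 / \<delta>) \<ge> 0"
  proof -
    have "real n ^ 2 \<ge> 1" using n1 by simp
    then have "\<delta> \<le> 4 * real n ^ 2" using de1 by linarith
    then have "1 \<le> 4 * real n ^ 2 / \<delta>" using de0 by (simp add: le_divide_eq)
    then show ?thesis by simp
  qed
  have ln2pos: "ln (8 * real m * real n / \<delta>) \<ge> 0"
  proof -
    have "real m * real n \<ge> 1" using m1 n1 by (metis mult_le_mono of_nat_1 of_nat_mono of_nat_mult nat_mult_1)
    then have "\<delta> \<le> 8 * real m * real n" using de1 by linarith
    then have "1 \<le> 8 * real m * real n / \<delta>" using de0 by (simp add: le_divide_eq)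
    then show ?thesis by simp
  qed
  have Lam2: "Lam powr 2 = Lam^2" using Lam1 by simp
  define c0 where "c0 = 1 / (Cq * Lam^2)"
  have c0pos: "c0 > 0" unfolding c0_def using Cq Lam1 by simp
  have c0le: "c0 \<le> 1 / Cq"
  proof -
    have "Cq * 1 \<le> Cq * Lam^2" using Cq Lam1 by (intro mult_left_mono) auto
    then show ?thesis unfolding c0_def using Cq Lam1 by (intro divide_left_mono) auto
  qed
  have c0Lam: "Lam * c0 \<le> 1 / Cq"
  proof -
    have "Lam * c0 = 1 / (Cq * Lam)" unfolding c0_def using Lam1 by (simp add: power2_eq_square field_simps)
    also have "\<dots> \<le> 1 / (Cq * 1)" using Cq Lam1 by (intro divide_left_mono mult_left_mono) auto
    finally show ?thesis by simp
  qed
  have vmu_pos: "vinner d mu mu > 0" by (rule vinner_pos[OF mu0])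
  have vn_pos: "vnorm d mu > 0" unfolding vnorm_def using vmu_pos by simp
  have sqd: "sqrt (real d) > 0" using d1 by simp
  have powa: "real m powr (- 2 / (q - 2)) \<le> 1"
  proof -
    have "real m powr (- 2 / (q - 2)) \<le> real m powr 0" using m1 q2 by (intro powr_mono) (auto simp: divide_nonpos_pos)
    then show ?thesis using m1 by simp
  qed
  have powb: "real n powr (- max (1 / (q - 2)) 1) \<le> 1"
  proof -
    have "real n powr (- max (1 / (q - 2)) 1) \<le> real n powr 0" using n1 q2 by (intro powr_mono) auto
    then show ?thesis using n1 by simp
  qed
  define mn where "mn = min (1 / (sigp * sqrt (real d))) (1 / vnorm d mu)"
  have mn0: "mn \<ge> 0" unfolding mn_def using sp sqd vn_pos by simp
  have s0c: "sgz \<le> c0 * mn"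
  proof -
    have "sgz \<le> c0 * (real m powr (- 2 / (q - 2)) * real n powr (- max (1 / (q - 2)) 1)) * mn"
      using c4 unfolding c0_def mn_def Cq_def Lam2 by (simp add: mult.assoc)
    also have "\<dots> \<le> c0 * 1 * mn"
      using powa powb c0pos mn0 by (intro mult_right_mono mult_left_mono) (auto simp: mult_le_one)
    finally show ?thesis by simp
  qed
  have s0mu: "sgz * vnorm d mu \<le> c0"
  proof -
    have "sgz \<le> c0 * (1 / vnorm d mu)" using s0c c0pos unfolding mn_def
      by (meson min.cobounded2 mult_left_mono less_imp_le order_trans)
    then show ?thesis using vn_pos by (simp add: field_simps)
  qed
  have s0xi: "sgz * (sigp * sqrt (real d)) \<le> c0"
  proof -
    have "sgz \<le> c0 * (1 / (sigp * sqrt (real d)))" using s0c c0pos unfolding mn_def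
      by (meson min.cobounded1 mult_left_mono less_imp_le order_trans)
    then show ?thesis using sp sqd by (simp add: field_simps)
  qed
  have etac: "eta * (sigp^2 * real d) \<le> c0"
  proof -
    have "eta \<le> c0 * (1 / (sigp^2 * real d))" using c3 c0pos unfolding c0_def Cq_def Lam2
      by (meson min.cobounded2 mult_left_mono less_imp_le order_trans)
    then show ?thesis using sp d1 by (simp add: field_simps)
  qed
  from E have
    E3: "\<forall>i<n. sigp\<^sup>2 * real d / 2 \<le> (vnorm d (xi i))\<^sup>2 \<and> (vnorm d (xi i))\<^sup>2 \<le> 3 * sigp\<^sup>2 * real d / 2" and
    E4: "\<forall>i<n. \<forall>i'<n. i \<noteq> i' \<longrightarrow>
        \<bar>vinner d (xi i) (xi i')\<bar> \<le> 2 * sigp\<^sup>2 * sqrt (real d * ln (4 * real n ^ 2 / \<delta>))" and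
    E5: "\<forall>j\<in>{1,-1}. \<forall>r<m.
        \<bar>vinner d (Wz j r) mu\<bar> \<le> sqrt (2 * ln (8 * real m / \<delta>)) * sgz * vnorm d mu" and
    E6: "\<forall>j\<in>{1,-1}. \<forall>r<m. \<forall>i<n.
        \<bar>vinner d (Wz j r) (xi i)\<bar> \<le> 2 * sqrt (ln (8 * real m * real n / \<delta>)) * sgz * sigp * sqrt (real d)"
    unfolding E_prelim_def by blast+
  define Bx where "Bx = 2 * sqrt (ln (8 * real m * real n / \<delta>)) * sgz * sigp * sqrt (real d)"
  define K where "K = 4 * sqrt (real d * ln (4 * real n ^ 2 / \<delta>)) / real d"
  define R where "R = 4 + sqrt (8 * real m * Lam)"
  define H where "H = eta * (3/2 * sigp^2 * real d)"
  have nx_lo: "vinner d (xi i) (xi i) \<ge> sigp^2 * real d / 2" if "i < n" for i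
    using E3 that vnorm_sq[of d "xi i"] by auto
  have nx_hi: "vinner d (xi i) (xi i) \<le> 3/2 * sigp^2 * real d" if "i < n" for i
    using E3 that vnorm_sq[of d "xi i"] by auto
  have sd_pos: "sigp^2 * real d > 0" using sp d1 by simp
  have bmu: "\<forall>j\<in>{1,-1}. \<forall>r<m. \<bar>vinner d (Wz j r) mu\<bar> \<le> 1"
  proof (intro ballI allI impI)
    fix j :: int and r assume j: "j \<in> {1,-1}" and r: "r < m"
    have sq: "sqrt (2 * ln (8 * real m / \<delta>)) \<le> 4 * Lam"
      by (rule sqrt_le_lin[of _ 10]) (use ln1 Lam1 in auto)
    have "\<bar>vinner d (Wz j r) mu\<bar> \<le> sqrt (2 * ln (8 * real m / \<delta>)) * sgz * vnorm d mu" using E5 j r by blast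
    also have "\<dots> = sqrt (2 * ln (8 * real m / \<delta>)) * (sgz * vnorm d mu)" by simp
    also have "\<dots> \<le> (4 * Lam) * c0" using sq s0mu s0 vn_pos Lam1 by (intro mult_mono) auto
    also have "\<dots> \<le> 4 * (1 / Cq)" using c0Lam by simp
    also have "\<dots> \<le> 1" using Cq by simp
    finally show "\<bar>vinner d (Wz j r) mu\<bar> \<le> 1" .
  qed
  have Bx_le: "Bx \<le> 1/4"
  proof -
    have sq: "sqrt (ln (8 * real m * real n / \<delta>)) \<le> 3 * Lam"
      by (rule sqrt_le_lin[of _ 6]) (use ln2 Lam1 in auto)
    have "Bx = 2 * sqrt (ln (8 * real m * real n / \<delta>)) * (sgz * (sigp * sqrt (real d)))"
      unfolding Bx_def by (simp add: mult.assoc)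
    also have "\<dots> \<le> 2 * (3 * Lam) * c0"
    proof (rule mult_mono)
      show "2 * sqrt (ln (8 * real m * real n / \<delta>)) \<le> 2 * (3 * Lam)" using sq by simp
      show "sgz * (sigp * sqrt (real d)) \<le> c0" by (rule s0xi)
      show "0 \<le> 2 * (3 * Lam)" using Lam1 by simp
      show "0 \<le> sgz * (sigp * sqrt (real d))" using s0 sp sqd by simp
    qed
    also have "\<dots> \<le> 6 * (1 / Cq)" using c0Lam by simp
    also have "\<dots> \<le> 1/4" using Cq by simp
    finally show ?thesis .
  qed
  have K0: "K \<ge> 0" unfolding K_def using ln3pos by simp
  have R4: "R \<ge> 4" unfolding R_def using Lam1 by simp
  have kap: "\<forall>i<n. \<forall>i'<n. i' \<noteq> i \<longrightarrow> \<bar>vinner d (xi i') (xi i)\<bar> / vinner d (xi i') (xi i') \<le> K"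
  proof (intro allI impI)
    fix i i' assume i: "i < n" and i': "i' < n" and ne: "i' \<noteq> i"
    have num: "\<bar>vinner d (xi i') (xi i)\<bar> \<le> 2 * sigp\<^sup>2 * sqrt (real d * ln (4 * real n ^ 2 / \<delta>))"
      using E4 i i' ne by blast
    have "\<bar>vinner d (xi i') (xi i)\<bar> / vinner d (xi i') (xi i') \<le> (2 * sigp\<^sup>2 * sqrt (real d * ln (4 * real n ^ 2 / \<delta>))) / (sigp^2 * real d / 2)"
      by (rule frac_le) (use num nx_lo[OF i'] sd_pos in auto)
    also have "\<dots> = K" unfolding K_def using sp d1 by (simp add: field_simps)
    finally show "\<bar>vinner d (xi i') (xi i)\<bar> / vinner d (xi i') (xi i') \<le> K" .
  qed
  have dlow: "real d \<ge> Cq * Lam^2 * real m * (real n)^2"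
  proof -
    have a: "real m powr (max 2 (4 / (q - 2))) \<ge> real m"
    proof -
      have "real m powr 2 \<le> real m powr (max 2 (4 / (q - 2)))" using m1 by (intro powr_mono) auto
      moreover have "real m \<le> real m powr 2" using m1 by (simp add: power2_eq_square)
      ultimately show ?thesis by linarith
    qed
    have b: "real n powr (max 4 ((2 * q - 2) / (q - 2))) \<ge> (real n)^2"
    proof -
      have "real n powr 4 \<le> real n powr (max 4 ((2 * q - 2) / (q - 2)))" using n1 by (intro powr_mono) auto
      moreover have "(real n)^2 \<le> real n powr 4"
      proof -
        have "(real n)^2 \<le> (real n)^4" using n1 by (intro power_increasing) auto
        then show ?thesis using n1 by simp
      qed
      ultimately show ?thesis by linarith
    qed
    have "Cq * Lam^2 * real m * (real n)^2 \<le> Cq * Lam^2 * real m powr (max 2 (4 / (q - 2))) * real n powr (max 4 ((2 * q - 2) / (q - 2)))"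
      using a b Cq Lam1 m1 by (intro mult_mono mult_left_mono) auto
    then show ?thesis using c1 unfolding Cq_def Lam2 by linarith
  qed
  have nRK: "real n * R * K \<le> 1/4"
  proof -
    have R2: "R^2 \<le> 48 * real m * Lam"
    proof -
      have "R^2 \<le> 2 * 4^2 + 2 * (sqrt (8 * real m * Lam))^2" unfolding R_def by (rule sq_sum_le)
      also have "(sqrt (8 * real m * Lam))^2 = 8 * real m * Lam" using m1 Lam1 by simp
      finally have "R^2 \<le> 32 + 16 * real m * Lam" by simp
      moreover have "real m * Lam \<ge> 1 * 1" by (rule mult_mono) (use m1 Lam1 in auto)
      ultimately show ?thesis by linarith
    qed
    have K2: "K^2 \<le> 80 * Lam / real d"
    proof -
      have "K^2 = 16 * (real d * ln (4 * real n ^ 2 / \<delta>)) / (real d)^2"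
        unfolding K_def using ln3pos by (simp add: power_divide power_mult_distrib)
      also have "\<dots> = 16 * ln (4 * real n ^ 2 / \<delta>) / real d" using d1 by (simp add: power2_eq_square)
      also have "\<dots> \<le> 16 * (5 * Lam) / real d" using ln3 d1 by (intro divide_right_mono) auto
      finally show ?thesis by simp
    qed
    have "(real n * R * K)^2 = (real n)^2 * R^2 * K^2" by (simp add: power_mult_distrib)
    also have "\<dots> \<le> (real n)^2 * (48 * real m * Lam) * (80 * Lam / real d)"
    proof -
      have "R^2 * K^2 \<le> (48 * real m * Lam) * (80 * Lam / real d)"
        by (rule mult_mono[OF R2 K2]) (use Lam1 in auto)
      then have "(real n)^2 * (R^2 * K^2) \<le> (real n)^2 * ((48 * real m * Lam) * (80 * Lam / real d))"
        by (rule mult_left_mono) simp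
      then show ?thesis by (simp only: mult.assoc)
    qed
    also have "\<dots> = 3840 * (Lam^2 * real m * (real n)^2) / real d" by (simp add: power2_eq_square field_simps)
    also have "\<dots> \<le> 3840 * (Lam^2 * real m * (real n)^2) / (Cq * Lam^2 * real m * (real n)^2)"
    proof (rule divide_left_mono)
      show "Cq * Lam^2 * real m * (real n)^2 \<le> real d" by (rule dlow)
      show "0 \<le> 3840 * (Lam^2 * real m * (real n)^2)" by simp
      have "Cq * Lam^2 > 0" using Cq Lam1 by simp
      moreover have "real m * (real n)^2 > 0" using m1 n1 by simp
      ultimately have "(Cq * Lam^2) * (real m * (real n)^2) > 0" by (rule mult_pos_pos)
      then show "0 < real d * (Cq * Lam^2 * real m * (real n)^2)" using d1 by (simp add: mult.assoc)
    qed
    also have "\<dots> = 3840 / Cq" using Lam1 m1 n1 by (simp add: field_simps)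
    also have "\<dots> \<le> (1/4)^2" using Cq by (simp add: field_simps)
    finally have "(real n * R * K)^2 \<le> (1/4)^2" .
    then show ?thesis by (rule power2_le_imp_le) simp
  qed
  have Hb: "\<forall>i<n. eta * vinner d (xi i) (xi i) \<le> H"
  proof (intro allI impI)
    fix i assume i: "i < n"
    have "eta * vinner d (xi i) (xi i) \<le> eta * (3/2 * sigp^2 * real d)"
      using nx_hi[OF i] et by (intro mult_left_mono) auto
    then show "eta * vinner d (xi i) (xi i) \<le> H" unfolding H_def .
  qed
  have Hle: "H \<le> 3/2 * (1 / Cq)"
  proof -
    have "H = 3/2 * (eta * (sigp^2 * real d))" unfolding H_def by simp
    also have "\<dots> \<le> 3/2 * c0" using etac by (intro mult_left_mono) auto
    finally show ?thesis using c0le by linarith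
  qed
  have H0: "H \<ge> 0" unfolding H_def using et by simp
  have Hs: "exp 2 * q * H \<le> 1/2"
  proof -
    have "exp 2 * q * H \<le> 9 * q * (3/2 * (1 / Cq))"
      using exp2_le Hle H0 q2 by (intro mult_mono) auto
    also have "\<dots> = 27 / 400000" unfolding Cq_def using q2 by simp
    finally show ?thesis by simp
  qed
  have TT: "Tstar * (exp 2 * q * H * exp (-(R^2/(8*real m)))) \<le> 1/2"
  proof -
    have "R^2 \<ge> 8 * real m * Lam"
    proof -
      have "sqrt (8 * real m * Lam) \<le> R" unfolding R_def by simp
      then have "(sqrt (8 * real m * Lam))^2 \<le> R^2" by (rule power_mono) (use Lam1 in simp)
      then show ?thesis using m1 Lam1 by simp
    qed
    then have "R^2 / (8 * real m) \<ge> Lam" using m1 by (simp add: field_simps)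
    then have "exp (-(R^2/(8*real m))) \<le> exp (- Lam)" by simp
    then have "Tstar * exp (-(R^2/(8*real m))) \<le> exp Lam * exp (- Lam)"
      using TS T0 by (intro mult_mono) auto
    also have "\<dots> = 1" by (simp flip: exp_add)
    finally have X: "Tstar * exp (-(R^2/(8*real m))) \<le> 1" .
    have "Tstar * (exp 2 * q * H * exp (-(R^2/(8*real m)))) = (exp 2 * q * H) * (Tstar * exp (-(R^2/(8*real m))))"
      by (simp add: mult_ac)
    also have "\<dots> \<le> (exp 2 * q * H) * 1" using X H0 q2 by (intro mult_left_mono) auto
    finally have "Tstar * (exp 2 * q * H * exp (-(R^2/(8*real m)))) \<le> (exp 2 * q * H) * 1" .
    then show ?thesis using Hs by linarith
  qed
  have xipos: "\<forall>i<n. vinner d (xi i) (xi i) > 0" using nx_lo sd_pos by (meson half_gt_zero order_less_le_trans)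
  have bxi: "\<forall>j\<in>{1,-1}. \<forall>r<m. \<forall>i<n. \<bar>vinner d (Wz j r) (xi i)\<bar> \<le> Bx" unfolding Bx_def using E6 by blast
  have B0: "Bx + real n * R * K \<le> 1/2" using Bx_le nRK by linarith
  have m1': "m \<ge> 1" and n1': "n \<ge> 1" using m1 n1 by auto
  interpret D: dyn2 q m d n mu y xi Wz eta Bx K R H Tstar
    by unfold_locales (fact q2 m1' n1' et yy orth xipos bmu bxi kap B0 K0 R4 Hb Hs TT)+
  show ?thesis
  proof (intro allI impI)
    fix t assume t: "real t \<le> Tstar"
    define M2 where "M2 = 3/2 * max ((vnorm d mu)\<^sup>2) (sigp\<^sup>2 * real d)"
    have mx0: "max ((vnorm d mu)\<^sup>2) (sigp\<^sup>2 * real d) \<ge> 0" by (rule order_trans[OF _ max.cobounded1]) simp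
    have M1: "vinner d mu mu \<le> M2" unfolding M2_def using vnorm_sq[of d mu] mx0 by simp
    have M2b: "\<forall>i<n. vinner d (xi i) (xi i) \<le> M2"
    proof (intro allI impI)
      fix i assume i: "i < n"
      have "3/2 * (sigp\<^sup>2 * real d) \<le> 3/2 * max ((vnorm d mu)\<^sup>2) (sigp\<^sup>2 * real d)"
        by (intro mult_left_mono) auto
      then show "vinner d (xi i) (xi i) \<le> M2" unfolding M2_def using nx_hi[OF i] by linarith
    qed
    have "frob2 m d (grad (LS q m d n y mu xi) (D.Wt t)) \<le> 256 * q^2 * M2 * LS q m d n y mu xi (D.Wt t)"
      by (rule D.final_bound[OF t M1 M2b])
    then show "frob2 m d (grad (LS q m d n y mu xi) (gd (LS q m d n y mu xi) eta Wz t))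
           \<le> 384 * q^2 * max ((vnorm d mu)\<^sup>2) (sigp\<^sup>2 * real d) * LS q m d n y mu xi (gd (LS q m d n y mu xi) eta Wz t)"
      unfolding D.Wt_def M2_def by (simp add: mult.assoc)
  qed
qed

theorem lemma5p3:
  fixes q :: real and cT :: real and kT :: nat
  assumes "q > 2" and "cT > 0"
  shows "\<exists>C \<kappa> Cout. C > 0 \<and> \<kappa> \<ge> 0 \<and> Cout > 0 \<and>
    (\<forall>(m::nat) (d::nat) (n::nat) (mu::nat \<Rightarrow> real) (sigp::real) (sig0::real) (eta::real)
       (\<epsilon>::real) (\<delta>::real) (y::nat \<Rightarrow> real) (xi::nat \<Rightarrow> nat \<Rightarrow> real)
       (W0::int \<Rightarrow> nat \<Rightarrow> nat \<Rightarrow> real).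
      let Tstar = cT / eta * (1 + 1 / \<epsilon> + 1 / vnorm d mu + 1 / (real d * sigp\<^sup>2) + 1 / sig0
                                 + real n + real m + real d) ^ kT;
          \<Lambda> = ln (exp 1 + real m + real n + real d + 1 / \<delta> + Tstar);
          L = LS q m d n y mu xi
      in
      m \<ge> 1 \<and> n \<ge> 1 \<and> (\<exists>k<d. mu k \<noteq> 0) \<and> sigp > 0 \<and> sig0 > 0 \<and> eta > 0 \<and>
      \<epsilon> > 0 \<and> 0 < \<delta> \<and> \<delta> < 1 \<and>
      (\<forall>i<n. y i = 1 \<or> y i = -1) \<and>
      (\<forall>i<n. vinner d (xi i) mu = 0) \<and>
      \<comment> \<open>condition (1)\<close>
      real d \<ge> C * \<Lambda> powr \<kappa> * real m powr (max 2 (4 / (q - 2)))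
                                  * real n powr (max 4 ((2 * q - 2) / (q - 2))) \<and>
      \<comment> \<open>condition (2)\<close>
      real n \<ge> C * ln (real d) powr \<kappa> \<and> real m \<ge> C * ln (real d) powr \<kappa> \<and>
      \<comment> \<open>condition (3)\<close>
      eta \<le> 1 / (C * \<Lambda> powr \<kappa>) * min (1 / (vnorm d mu)\<^sup>2) (1 / (sigp\<^sup>2 * real d)) \<and>
      \<comment> \<open>condition (4)\<close>
      C * \<Lambda> powr \<kappa> * real n / sqrt (real d) * min (1 / (sigp * sqrt (real d))) (1 / vnorm d mu) \<le> sig0 \<and>
      sig0 \<le> 1 / (C * \<Lambda> powr \<kappa>) * real m powr (- 2 / (q - 2)) * real n powr (- max (1 / (q - 2)) 1)
               * min (1 / (sigp * sqrt (real d))) (1 / vnorm d mu) \<and>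
      E_prelim \<delta> m d n sigp sig0 y mu xi W0
      \<longrightarrow>
      (\<forall>t::nat. real t \<le> Tstar \<longrightarrow>
         frob2 m d (grad L (gd L eta W0 t))
           \<le> Cout * max ((vnorm d mu)\<^sup>2) (sigp\<^sup>2 * real d) * L (gd L eta W0 t)))"
  apply (rule exI[of _ "200000 * q"], rule exI[of _ "2::real"], rule exI[of _ "384 * q^2"])
  apply (intro conjI allI)
  subgoal using assms by simp
  subgoal by simp
  subgoal using assms by simp
  subgoal for m d n mu sigp sig0 eta \<epsilon> \<delta> y xi W0
  proof -
    define Tstar where "Tstar = cT / eta * (1 + 1 / \<epsilon> + 1 / vnorm d mu + 1 / (real d * sigp\<^sup>2) + 1 / sig0
                                 + real n + real m + real d) ^ kT"
    have T0: "Tstar \<ge> 0" if a: "0 < eta" "\<epsilon> > 0" "sig0 > 0"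
    proof -
      have v: "vnorm d mu \<ge> 0" unfolding vnorm_def using vinner_sq_nonneg by simp
      have "0 \<le> 1 + 1 / \<epsilon> + 1 / vnorm d mu + 1 / (real d * sigp\<^sup>2) + 1 / sig0 + real n + real m + real d"
        using a v by (intro add_nonneg_nonneg) auto
      then show ?thesis unfolding Tstar_def using a assms(2) by (intro mult_nonneg_nonneg divide_nonneg_nonneg zero_le_power) auto
    qed
    show ?thesis unfolding Let_def Tstar_def[symmetric]
      apply (intro impI)
      apply (elim conjE)
      apply (rule main_core[where q=q and m=m and d=d and n=n and mu=mu and sigp=sigp and sgz=sig0 and eta=eta and \<delta>=\<delta>
       and y=y and xi=xi and Wz=W0 and Tstar=Tstar
       and Lam="ln (exp 1 + real m + real n + real d + 1 / \<delta> + Tstar)"])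
      apply (assumption | rule assms(1) refl T0)+
      done
  qed

  done


end
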